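(* Let $A,B\in\mathbb F^{n\times n}$ with $A$ Lyapunov regular and $B\in\mathcal C_{\mathcal L}(A)\cap\{A\}''_{\mathbb F}$, and let $C_1,\dots,C_m$ be the matrices of a minimal Hill representation of $\mathcal L_{A,B}$ (they lie in $\{A^*\}''_{\mathbb F}$). Assume $\operatorname{span}\{C_1,\dots,C_m,I_n\}=\{A^*\}''_{\mathbb F}$. Then $\ker L_{\mathbf R}\subseteq\ker M_{\mathbf R}$ for every finite collection $\mathbf R\subset\mathbb F^{n\times n}$. In particular this holds when $m=\dim\{A\}''_{\mathbb F}$.
   Context: $\mathbb F=\mathbb R$ or $\mathbb C$; $\otimes$ Kronecker product. $A$ Lyapunov regular: eigenvalues satisfy $\lambda_i+\bar\lambda_j\ne0$. $\mathcal L_Y(X)=XY+Y^*X$, $\mathcal L_{A,B}=\mathcal L_B\circ\mathcal L_A^{-1}$. $\{A\}''_{\mathbb F}$ bicommutant of $A$ in $\mathbb F^{n\times n}$; $\overline{\mathcal H}(A)=\{H\text{ Hermitian}:HA+A^*H\succeq0\}$, $\mathcal C_{\mathcal L}(A)=\{B:\overline{\mathcal H}(A)\subseteq\overline{\mathcal H}(B)\}$. Let $\mathcal L_{A,B}(V)=\sum_{k,l=1}^m\mathbb H_{kl}C_kVC_l^*$ be a minimal Hill representation (smallest possible $m$) with Hill matrix $\mathbb H$; under the hypotheses $\mathbb H$ is positive definite; fix an invertible $P\in\mathbb F^{m\times m}$ with $\mathbb H=P^*P$. Set $\mathbf C=\begin{bmatrix}C_1^*\\\vdots\\C_m^*\end{bmatrix}$,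 $L_R=\begin{bmatrix}R\\(P\otimes R)\mathbf C\end{bmatrix}$, $M_R=\begin{bmatrix}RB\\-(P\otimes RA)\mathbf C\end{bmatrix}$. For a finite collection $\mathbf R=\{R_1,\dots,R_k\}$ set $L_{\mathbf R}=[L_{R_1}\ \cdots\ L_{R_k}]$, $M_{\mathbf R}=[M_{R_1}\ \cdots\ M_{R_k}]$. *)

theory Defs
  imports "Jordan_Normal_Form.Schur_Decomposition" "Jordan_Normal_Form.Char_Poly"
    "Jordan_Normal_Form.Matrix_Kernel"
begin

(* Conjugate transpose A^* is mat_adjoint.  Matrices are n x n JNF matrices over
   'a :: conjugatable_ordered_field (instantiated with real and complex). *)

definition hermitian_mat :: "nat \<Rightarrow> 'a::conjugatable_ordered_field mat \<Rightarrow> bool" where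
  "hermitian_mat n H \<longleftrightarrow> H \<in> carrier_mat n n \<and> mat_adjoint H = H"

definition psd_mat :: "nat \<Rightarrow> 'a::conjugatable_ordered_field mat \<Rightarrow> bool" where
  "psd_mat n H \<longleftrightarrow> hermitian_mat n H \<and> (\<forall>v\<in>carrier_vec n. 0 \<le> (H *\<^sub>v v) \<bullet>c v)"

definition lyap_regular :: "('a::conjugatable_ordered_field \<Rightarrow> complex) \<Rightarrow> nat \<Rightarrow> 'a mat \<Rightarrow> bool" where
  "lyap_regular emb n A \<longleftrightarrow> A \<in> carrier_mat n n \<and>
     (\<forall>la mu. eigenvalue (map_mat emb A) la \<longrightarrow> eigenvalue (map_mat emb A) mu \<longrightarrow> la + cnj mu \<noteq> 0)"

definition lyap_op :: "'a::conjugatable_ordered_field mat \<Rightarrow> 'a mat \<Rightarrow> 'a mat" where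
  "lyap_op Y X = X * Y + mat_adjoint Y * X"

definition lyap_inv :: "nat \<Rightarrow> 'a::conjugatable_ordered_field mat \<Rightarrow> 'a mat \<Rightarrow> 'a mat" where
  "lyap_inv n A V = (THE X. X \<in> carrier_mat n n \<and> lyap_op A X = V)"

definition lyap_AB :: "nat \<Rightarrow> 'a::conjugatable_ordered_field mat \<Rightarrow> 'a mat \<Rightarrow> 'a mat \<Rightarrow> 'a mat" where
  "lyap_AB n A B V = lyap_op B (lyap_inv n A V)"

definition HH :: "nat \<Rightarrow> 'a::conjugatable_ordered_field mat \<Rightarrow> 'a mat set" where
  "HH n A = {H. hermitian_mat n H \<and> psd_mat n (H * A + mat_adjoint A * H)}"

definition CL :: "nat \<Rightarrow> 'a::conjugatable_ordered_field mat \<Rightarrow> 'a mat set" where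
  "CL n A = {B. B \<in> carrier_mat n n \<and> HH n A \<subseteq> HH n B}"

definition commutant :: "nat \<Rightarrow> 'a::conjugatable_ordered_field mat set \<Rightarrow> 'a mat set" where
  "commutant n S = {X. X \<in> carrier_mat n n \<and> (\<forall>Y\<in>S. X * Y = Y * X)}"

definition bicomm :: "nat \<Rightarrow> 'a::conjugatable_ordered_field mat \<Rightarrow> 'a mat set" where
  "bicomm n A = commutant n (commutant n {A})"

definition hill_sum :: "nat \<Rightarrow> nat \<Rightarrow> (nat \<Rightarrow> 'a::conjugatable_ordered_field mat) \<Rightarrow> 'a mat \<Rightarrow> 'a mat \<Rightarrow> 'a mat" where
  "hill_sum n m C H V = mat n n (\<lambda>(i,j). \<Sum>k<m. \<Sum>l<m. H $$ (k,l) * (C k * V * mat_adjoint (C l)) $$ (i,j))"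

definition hill_rep :: "nat \<Rightarrow> ('a::conjugatable_ordered_field mat \<Rightarrow> 'a mat) \<Rightarrow> nat \<Rightarrow> (nat \<Rightarrow> 'a mat) \<Rightarrow> 'a mat \<Rightarrow> bool" where
  "hill_rep n \<Phi> m C H \<longleftrightarrow> H \<in> carrier_mat m m \<and> (\<forall>k<m. C k \<in> carrier_mat n n) \<and>
     (\<forall>V\<in>carrier_mat n n. \<Phi> V = hill_sum n m C H V)"

definition min_hill_rep :: "nat \<Rightarrow> ('a::conjugatable_ordered_field mat \<Rightarrow> 'a mat) \<Rightarrow> nat \<Rightarrow> (nat \<Rightarrow> 'a mat) \<Rightarrow> 'a mat \<Rightarrow> bool" where
  "min_hill_rep n \<Phi> m C H \<longleftrightarrow> hill_rep n \<Phi> m C H \<and>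
     (\<forall>m' (C' :: nat \<Rightarrow> 'a mat) H'. hill_rep n \<Phi> m' C' H' \<longrightarrow> m \<le> m')"

definition mat_lin_span :: "nat \<Rightarrow> nat \<Rightarrow> (nat \<Rightarrow> 'a::conjugatable_ordered_field mat) \<Rightarrow> 'a mat set" where
  "mat_lin_span n d D = {mat n n (\<lambda>(i,j). \<Sum>k<d. c k * D k $$ (i,j)) | c. True}"

definition span_C_I :: "nat \<Rightarrow> nat \<Rightarrow> (nat \<Rightarrow> 'a::conjugatable_ordered_field mat) \<Rightarrow> 'a mat set" where
  "span_C_I n m C = mat_lin_span n (Suc m) (\<lambda>k. if k < m then C k else 1\<^sub>m n)"

definition mat_subspace_dim :: "nat \<Rightarrow> 'a::conjugatable_ordered_field mat set \<Rightarrow> nat" where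
  "mat_subspace_dim n S = (LEAST d. \<exists>D. (\<forall>k<d. D k \<in> S) \<and> S \<subseteq> mat_lin_span n d D)"

definition kron :: "nat \<Rightarrow> nat \<Rightarrow> 'a::conjugatable_ordered_field mat \<Rightarrow> 'a mat \<Rightarrow> 'a mat" where
  "kron m n P R = mat (m*n) (m*n) (\<lambda>(i,j). P $$ (i div n, j div n) * R $$ (i mod n, j mod n))"

(* bold C = [C_1^*; ...; C_m^*] of size mn x n *)
definition stackC :: "nat \<Rightarrow> nat \<Rightarrow> (nat \<Rightarrow> 'a::conjugatable_ordered_field mat) \<Rightarrow> 'a mat" where
  "stackC n m C = mat (m*n) n (\<lambda>(i,j). mat_adjoint (C (i div n)) $$ (i mod n, j))"

definition vstack :: "'a mat \<Rightarrow> 'a mat \<Rightarrow> 'a mat" where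
  "vstack X Y = mat (dim_row X + dim_row Y) (dim_col X)
     (\<lambda>(i,j). if i < dim_row X then X $$ (i,j) else Y $$ (i - dim_row X, j))"

definition L_R :: "nat \<Rightarrow> nat \<Rightarrow> (nat \<Rightarrow> 'a::conjugatable_ordered_field mat) \<Rightarrow> 'a mat \<Rightarrow> 'a mat \<Rightarrow> 'a mat" where
  "L_R n m C P R = vstack R (kron m n P R * stackC n m C)"

definition M_R :: "nat \<Rightarrow> nat \<Rightarrow> (nat \<Rightarrow> 'a::conjugatable_ordered_field mat) \<Rightarrow> 'a mat \<Rightarrow> 'a mat \<Rightarrow> 'a mat \<Rightarrow> 'a mat \<Rightarrow> 'a mat" where
  "M_R n m C P A B R = vstack (R * B) (- (kron m n P (R * A) * stackC n m C))"

definition hcat :: "nat \<Rightarrow> nat \<Rightarrow> 'a mat list \<Rightarrow> 'a mat" where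
  "hcat r n Xs = mat r (length Xs * n) (\<lambda>(i,j). (Xs ! (j div n)) $$ (i, j mod n))"

definition L_Rs :: "nat \<Rightarrow> nat \<Rightarrow> (nat \<Rightarrow> 'a::conjugatable_ordered_field mat) \<Rightarrow> 'a mat \<Rightarrow> 'a mat list \<Rightarrow> 'a mat" where
  "L_Rs n m C P Rs = hcat (n + m*n) n (map (L_R n m C P) Rs)"

definition M_Rs :: "nat \<Rightarrow> nat \<Rightarrow> (nat \<Rightarrow> 'a::conjugatable_ordered_field mat) \<Rightarrow> 'a mat \<Rightarrow> 'a mat \<Rightarrow> 'a mat \<Rightarrow> 'a mat list \<Rightarrow> 'a mat" where
  "M_Rs n m C P A B Rs = hcat (n + m*n) n (map (M_R n m C P A B) Rs)"

end

theory Submission imports Defs begin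

lemma adj_def': "mat_adjoint (A::'a::conjugatable_field mat) = mat (dim_col A) (dim_row A) (\<lambda>(i,j). conjugate (A $$ (j,i)))"
  unfolding mat_adjoint_def by (rule eq_matI, auto simp: mat_of_rows_def)

lemma adj_dims[simp]: "dim_row (mat_adjoint A) = dim_col A" "dim_col (mat_adjoint A) = dim_row A"
  by (auto simp: adj_def')

lemma adj_index[simp]: "i < dim_col A \<Longrightarrow> j < dim_row A \<Longrightarrow> mat_adjoint A $$ (i,j) = conjugate (A $$ (j,i))"
  by (auto simp: adj_def')

lemma adj_carrier[simp]: "A \<in> carrier_mat n m \<Longrightarrow> mat_adjoint A \<in> carrier_mat m n"
  unfolding carrier_mat_def by simp

lemma adj_adj: "mat_adjoint (mat_adjoint A) = A"
  by (rule eq_matI, simp_all)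

lemma adj_mult: assumes "A \<in> carrier_mat n k" "B \<in> carrier_mat k m"
  shows "mat_adjoint (A * B) = mat_adjoint B * mat_adjoint A"
  using assms by (intro eq_matI, simp_all add: scalar_prod_def sum_conjugate conjugate_dist_mul mult.commute)

lemma conj_one[simp]: "conjugate (1::'a::conjugatable_field) = 1"
proof -
  have "conjugate (1::'a) = conjugate 1 * conjugate 1" using conjugate_dist_mul[of "1::'a" 1] by simp
  moreover have "conjugate (1::'a) \<noteq> 0" by simp
  ultimately show ?thesis by (metis mult_cancel_right1)
qed

lemma adj_one[simp]: "mat_adjoint (1\<^sub>m n :: 'a::conjugatable_field mat) = 1\<^sub>m n"
  by (rule eq_matI, simp_all)

lemma adj_add: assumes "A \<in> carrier_mat n m" "B \<in> carrier_mat n m"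
  shows "mat_adjoint (A + B) = mat_adjoint A + mat_adjoint B"
  using assms by (intro eq_matI, simp_all add: conjugate_dist_add)

lemma adj_inj: "mat_adjoint A = mat_adjoint B \<Longrightarrow> A = B"
  by (metis adj_adj)

lemma sum_split_mult: fixes k n :: nat shows "(\<Sum>j<k*n. f j) = (\<Sum>i<k. \<Sum>s<n. f (i*n+s))"
proof (induct k)
  case 0 then show ?case by simp
next
  case (Suc k)
  have "(\<Sum>j<Suc k*n. f j) = (\<Sum>j<k*n. f j) + (\<Sum>j\<in>{k*n..<k*n+n}. f j)"
    by (simp add: lessThan_atLeast0 sum.atLeastLessThan_concat add.commute)
  also have "(\<Sum>j\<in>{k*n..<k*n+n}. f j) = (\<Sum>s<n. f (k*n+s))"
    by (subst sum.atLeastLessThan_shift_0) (simp add: lessThan_atLeast0 o_def)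
  finally show ?case using Suc by simp
qed

lemma mult_mat_vec_sum: "A \<in> carrier_mat r c \<Longrightarrow> v \<in> carrier_vec c \<Longrightarrow> q < r \<Longrightarrow>
  (A *\<^sub>v v) $ q = (\<Sum>j<c. A $$ (q,j) * v $ j)"
  by (simp add: scalar_prod_def lessThan_atLeast0)

definition subv :: "nat \<Rightarrow> 'a vec \<Rightarrow> nat \<Rightarrow> 'a vec" where
  "subv n x i = vec n (\<lambda>s. x $ (i*n+s))"

lemma hcat_mult: assumes n: "n > 0" and Xs: "set Xs \<subseteq> carrier_mat r n" and x: "x \<in> carrier_vec (length Xs * n)"
  and q: "q < r"
  shows "(hcat r n Xs *\<^sub>v x) $ q = (\<Sum>i<length Xs. ((Xs ! i) *\<^sub>v subv n x i) $ q)"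
proof -
  have c: "hcat r n Xs \<in> carrier_mat r (length Xs * n)" by (simp add: hcat_def)
  have "(hcat r n Xs *\<^sub>v x) $ q = (\<Sum>j<length Xs * n. hcat r n Xs $$ (q,j) * x $ j)"
    by (rule mult_mat_vec_sum[OF c x q])
  also have "\<dots> = (\<Sum>i<length Xs. \<Sum>s<n. hcat r n Xs $$ (q,i*n+s) * x $ (i*n+s))"
    by (rule sum_split_mult)
  also have "\<dots> = (\<Sum>i<length Xs. ((Xs ! i) *\<^sub>v subv n x i) $ q)"
  proof (rule sum.cong[OF refl])
    fix i assume i: "i \<in> {..<length Xs}"
    have Xi: "Xs ! i \<in> carrier_mat r n" using Xs i by auto
    have sv: "subv n x i \<in> carrier_vec n" by (simp add: subv_def)
    have "((Xs ! i) *\<^sub>v subv n x i) $ q = (\<Sum>s<n. (Xs!i) $$ (q,s) * subv n x i $ s)"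
      by (rule mult_mat_vec_sum[OF Xi sv q])
    also have "\<dots> = (\<Sum>s<n. hcat r n Xs $$ (q,i*n+s) * x $ (i*n+s))"
    proof (rule sum.cong[OF refl])
      fix s assume s: "s \<in> {..<n}"
      have "Suc i * n \<le> length Xs * n" using i by (intro mult_le_mono1) auto
      hence lt: "i*n+s < length Xs * n" using s by simp
      show "(Xs!i) $$ (q,s) * subv n x i $ s = hcat r n Xs $$ (q,i*n+s) * x $ (i*n+s)"
        using s q lt n by (simp add: hcat_def subv_def)
    qed
    finally show "(\<Sum>s<n. hcat r n Xs $$ (q,i*n+s) * x $ (i*n+s)) = ((Xs ! i) *\<^sub>v subv n x i) $ q" by simp
  qed
  finally show ?thesis .
qed

lemma vstack_carrier: "X \<in> carrier_mat r1 c \<Longrightarrow> Y \<in> carrier_mat r2 c \<Longrightarrow> vstack X Y \<in> carrier_mat (r1+r2) c"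
  by (simp add: vstack_def)

lemma vstack_mult: assumes X: "X \<in> carrier_mat r1 c" and Y: "Y \<in> carrier_mat r2 c" and v: "v \<in> carrier_vec c"
  and q: "q < r1 + r2"
  shows "(vstack X Y *\<^sub>v v) $ q = (if q < r1 then (X *\<^sub>v v) $ q else (Y *\<^sub>v v) $ (q - r1))"
proof -
  have "(vstack X Y *\<^sub>v v) $ q = (\<Sum>j<c. vstack X Y $$ (q,j) * v $ j)"
    by (rule mult_mat_vec_sum[OF vstack_carrier[OF X Y] v q])
  also have "\<dots> = (if q < r1 then (\<Sum>j<c. X $$ (q,j) * v $ j) else (\<Sum>j<c. Y $$ (q-r1,j) * v $ j))"
    using X Y q by (auto simp: vstack_def intro!: sum.cong)
  also have "\<dots> = (if q < r1 then (X *\<^sub>v v) $ q else (Y *\<^sub>v v) $ (q - r1))"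
    using mult_mat_vec_sum[OF X v, of q] mult_mat_vec_sum[OF Y v, of "q-r1"] q by auto
  finally show ?thesis .
qed

lemma kron_carrier: "kron m n P R \<in> carrier_mat (m*n) (m*n)" by (simp add: kron_def)
lemma stackC_carrier: "stackC n m C \<in> carrier_mat (m*n) n" by (simp add: stackC_def)

lemma kron_stack_entry: assumes n: "n > 0" and R: "R \<in> carrier_mat n n" and C: "\<forall>l<m. C l \<in> carrier_mat n n"
  and p: "p < m" and r: "r < n" and j: "j < n"
  shows "(kron m n P R * stackC n m C) $$ (p*n+r, j) = (\<Sum>l<m. P $$ (p,l) * (R * mat_adjoint (C l)) $$ (r,j))"
proof -
  have "Suc p * n \<le> m * n" using p by (intro mult_le_mono1) auto
  hence q: "p*n+r < m*n" using r by simp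
  have "(kron m n P R * stackC n m C) $$ (p*n+r, j) = (\<Sum>k<m*n. kron m n P R $$ (p*n+r,k) * stackC n m C $$ (k,j))"
    using q j by (simp add: kron_def stackC_def scalar_prod_def lessThan_atLeast0)
  also have "\<dots> = (\<Sum>l<m. \<Sum>s<n. kron m n P R $$ (p*n+r,l*n+s) * stackC n m C $$ (l*n+s,j))"
    by (rule sum_split_mult)
  also have "\<dots> = (\<Sum>l<m. P $$ (p,l) * (R * mat_adjoint (C l)) $$ (r,j))"
  proof (rule sum.cong[OF refl])
    fix l assume l: "l \<in> {..<m}"
    have Cl: "C l \<in> carrier_mat n n" using C l by auto
    have "Suc l * n \<le> m * n" using l by (intro mult_le_mono1) auto
    hence lt: "\<And>s. s < n \<Longrightarrow> l*n+s < m*n" by simp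
    have "(R * mat_adjoint (C l)) $$ (r,j) = (\<Sum>s<n. R $$ (r,s) * mat_adjoint (C l) $$ (s,j))"
      using R Cl r j by (simp add: scalar_prod_def lessThan_atLeast0)
    then have "P $$ (p,l) * (R * mat_adjoint (C l)) $$ (r,j) = (\<Sum>s<n. P $$ (p,l) * R $$ (r,s) * mat_adjoint (C l) $$ (s,j))"
      by (simp add: sum_distrib_left mult.assoc)
    also have "\<dots> = (\<Sum>s<n. kron m n P R $$ (p*n+r,l*n+s) * stackC n m C $$ (l*n+s,j))"
      using q lt j n r Cl by (intro sum.cong refl) (simp add: kron_def stackC_def)
    finally show "(\<Sum>s<n. kron m n P R $$ (p*n+r,l*n+s) * stackC n m C $$ (l*n+s,j)) = P $$ (p,l) * (R * mat_adjoint (C l)) $$ (r,j)" by simp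
  qed
  finally show ?thesis .
qed

lemma kron_stack_mult: assumes n: "n > 0" and R: "R \<in> carrier_mat n n" and C: "\<forall>l<m. C l \<in> carrier_mat n n"
  and p: "p < m" and r: "r < n" and v: "v \<in> carrier_vec n"
  shows "((kron m n P R * stackC n m C) *\<^sub>v v) $ (p*n+r) = (\<Sum>l<m. P $$ (p,l) * ((R * mat_adjoint (C l)) *\<^sub>v v) $ r)"
proof -
  have "Suc p * n \<le> m * n" using p by (intro mult_le_mono1) auto
  hence q: "p*n+r < m*n" using r by simp
  have K: "kron m n P R * stackC n m C \<in> carrier_mat (m*n) n"
    using mult_carrier_mat[OF kron_carrier stackC_carrier] by blast
  have "((kron m n P R * stackC n m C) *\<^sub>v v) $ (p*n+r) = (\<Sum>j<n. (kron m n P R * stackC n m C) $$ (p*n+r,j) * v $ j)"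
    by (rule mult_mat_vec_sum[OF K v q])
  also have "\<dots> = (\<Sum>j<n. \<Sum>l<m. P $$ (p,l) * (R * mat_adjoint (C l)) $$ (r,j) * v $ j)"
    using kron_stack_entry[OF n R C p r] by (simp add: sum_distrib_right)
  also have "\<dots> = (\<Sum>l<m. P $$ (p,l) * (\<Sum>j<n. (R * mat_adjoint (C l)) $$ (r,j) * v $ j))"
    by (subst sum.swap) (simp add: sum_distrib_left mult.assoc)
  also have "\<dots> = (\<Sum>l<m. P $$ (p,l) * ((R * mat_adjoint (C l)) *\<^sub>v v) $ r)"
  proof (rule sum.cong[OF refl])
    fix l assume l: "l \<in> {..<m}"
    have "R * mat_adjoint (C l) \<in> carrier_mat n n" using R C l by auto
    from mult_mat_vec_sum[OF this v r] show "P $$ (p,l) * (\<Sum>j<n. (R * mat_adjoint (C l)) $$ (r,j) * v $ j) = P $$ (p,l) * ((R * mat_adjoint (C l)) *\<^sub>v v) $ r" by simp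
  qed
  finally show ?thesis .
qed

lemma mm_vec: assumes R: "R \<in> carrier_mat n n" and Y: "Y \<in> carrier_mat n n" and v: "v \<in> carrier_vec n" and r: "r < n"
  shows "((R*Y) *\<^sub>v v) $ r = (\<Sum>a<n. \<Sum>b<n. R $$ (r,a) * Y $$ (a,b) * v $ b)"
proof -
  have "((R*Y) *\<^sub>v v) $ r = (\<Sum>b<n. (R*Y) $$ (r,b) * v $ b)"
    using mult_mat_vec_sum[OF mult_carrier_mat[OF R Y] v r] .
  also have "\<dots> = (\<Sum>b<n. \<Sum>a<n. R $$ (r,a) * Y $$ (a,b) * v $ b)"
    using R Y r by (intro sum.cong refl) (simp add: scalar_prod_def lessThan_atLeast0 sum_distrib_right)
  also have "\<dots> = (\<Sum>a<n. \<Sum>b<n. R $$ (r,a) * Y $$ (a,b) * v $ b)"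
    by (rule sum.swap)
  finally show ?thesis .
qed

definition lc :: "nat \<Rightarrow> nat \<Rightarrow> (nat \<Rightarrow> 'a::comm_ring_1) \<Rightarrow> (nat \<Rightarrow> 'a mat) \<Rightarrow> 'a mat" where
  "lc n d c D = mat n n (\<lambda>(a,b). \<Sum>j<d. c j * D j $$ (a,b))"

lemma lc_carrier[simp]: "lc n d c D \<in> carrier_mat n n" by (simp add: lc_def)

lemma lc_vec: assumes R: "R \<in> carrier_mat n n" and D: "\<forall>j<d. D j \<in> carrier_mat n n" and v: "v \<in> carrier_vec n" and r: "r < n"
  shows "((R * lc n d c D) *\<^sub>v v) $ r = (\<Sum>j<d. c j * ((R * D j) *\<^sub>v v) $ r)"
proof -
  have "((R * lc n d c D) *\<^sub>v v) $ r = (\<Sum>a<n. \<Sum>b<n. R $$ (r,a) * lc n d c D $$ (a,b) * v $ b)"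
    by (rule mm_vec[OF R lc_carrier v r])
  also have "\<dots> = (\<Sum>a<n. \<Sum>b<n. \<Sum>j<d. c j * (R $$ (r,a) * D j $$ (a,b) * v $ b))"
    by (intro sum.cong refl) (simp add: lc_def sum_distrib_left sum_distrib_right mult_ac)
  also have "\<dots> = (\<Sum>a<n. \<Sum>j<d. \<Sum>b<n. c j * (R $$ (r,a) * D j $$ (a,b) * v $ b))"
    by (rule sum.cong[OF refl], rule sum.swap)
  also have "\<dots> = (\<Sum>j<d. \<Sum>a<n. \<Sum>b<n. c j * (R $$ (r,a) * D j $$ (a,b) * v $ b))"
    by (rule sum.swap)
  also have "\<dots> = (\<Sum>j<d. c j * ((R * D j) *\<^sub>v v) $ r)"
  proof (rule sum.cong[OF refl])
    fix j assume j: "j \<in> {..<d}"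
    show "(\<Sum>a<n. \<Sum>b<n. c j * (R $$ (r,a) * D j $$ (a,b) * v $ b)) = c j * ((R * D j) *\<^sub>v v) $ r"
      using mm_vec[OF R _ v r, of "D j"] D j by (simp add: sum_distrib_left)
  qed
  finally show ?thesis .
qed

lemma G_lc: assumes R: "\<forall>i<k. R i \<in> carrier_mat n n" and v: "\<forall>i<k. v i \<in> carrier_vec n"
  and D: "\<forall>j<d. D j \<in> carrier_mat n n"
  and G: "\<forall>j<d. (\<Sum>i<k. ((R i * D j) *\<^sub>v v i) $ r) = 0" and r: "r < n"
  shows "(\<Sum>i<k. ((R i * lc n d c D) *\<^sub>v v i) $ r) = 0"
proof -
  have "(\<Sum>i<k. ((R i * lc n d c D) *\<^sub>v v i) $ r) = (\<Sum>i<k. \<Sum>j<d. c j * ((R i * D j) *\<^sub>v v i) $ r)"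
    using R v D r by (intro sum.cong refl lc_vec) auto
  also have "\<dots> = (\<Sum>j<d. c j * (\<Sum>i<k. ((R i * D j) *\<^sub>v v i) $ r))"
    by (subst sum.swap) (simp add: sum_distrib_left)
  also have "\<dots> = 0" using G by simp
  finally show ?thesis .
qed

lemma adj_lc: assumes D: "\<forall>j<d. D j \<in> carrier_mat n n"
  shows "mat_adjoint (lc n d c D) = lc n d (\<lambda>j. conjugate (c j)) (\<lambda>j. mat_adjoint (D j))"
  using D by (intro eq_matI) (auto simp: lc_def sum_conjugate conjugate_dist_mul intro!: sum.cong)

lemma span_C_I_lc: "span_C_I n m C = {lc n (Suc m) c (\<lambda>k. if k < m then C k else 1\<^sub>m n) | c. True}"
  by (simp add: span_C_I_def mat_lin_span_def lc_def)

lemma inv_left: assumes P: "P \<in> carrier_mat m m" and inv: "invertible_mat P"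
  obtains Q where "Q \<in> carrier_mat m m" "Q * P = 1\<^sub>m m" "P * Q = 1\<^sub>m m"
proof -
  from inv obtain Q where 1: "inverts_mat P Q" and 2: "inverts_mat Q P"
    unfolding invertible_mat_def by auto
  note 1 = 1[unfolded inverts_mat_def] and 2 = 2[unfolded inverts_mat_def]
  have c1: "dim_col Q = m" using arg_cong[OF 1, of dim_col] P by simp
  have "dim_row Q = dim_col (Q * P)" using arg_cong[OF 2, of dim_col] by (simp only: index_one_mat)
  also have "\<dots> = dim_col P" by simp
  also have "\<dots> = m" using P by simp
  finally have c2: "dim_row Q = m" .
  have Qc: "Q \<in> carrier_mat m m" unfolding carrier_mat_def using c1 c2 by blast
  have a: "Q * P = 1\<^sub>m m" using 2 unfolding c2 .
  have b: "P * Q = 1\<^sub>m m" using 1 unfolding carrier_matD(1)[OF P] .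
  show ?thesis by (rule that[OF Qc a b])
qed

lemma inv_kill: assumes P: "P \<in> carrier_mat m m" and inv: "invertible_mat P"
  and h: "\<forall>p<m. (\<Sum>l<m. P $$ (p,l) * w l) = 0" and l: "l < m"
  shows "w l = 0"
proof -
  obtain Q where Q: "Q \<in> carrier_mat m m" "Q * P = 1\<^sub>m m" using inv_left[OF P inv] by blast
  let ?w = "vec m w"
  have "P *\<^sub>v ?w = 0\<^sub>v m"
    using h P by (intro eq_vecI) (auto simp: scalar_prod_def lessThan_atLeast0)
  moreover have "Q *\<^sub>v 0\<^sub>v m = 0\<^sub>v m" using Q by (intro eq_vecI) auto
  ultimately have "Q *\<^sub>v (P *\<^sub>v ?w) = 0\<^sub>v m" by simp
  hence "?w = 0\<^sub>v m" using Q P by (simp add: assoc_mult_mat_vec[symmetric])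
  thus ?thesis using l by (metis index_vec index_zero_vec(1))
qed

lemma uminus_mat_vec: fixes K :: "'a::comm_ring_1 mat" assumes K: "K \<in> carrier_mat r c" and v: "v \<in> carrier_vec c" and q: "q < r"
  shows "((- K) *\<^sub>v v) $ q = - ((K *\<^sub>v v) $ q)"
proof -
  have "((- K) *\<^sub>v v) $ q = (\<Sum>j<c. (- K) $$ (q,j) * v $ j)"
    by (rule mult_mat_vec_sum[OF uminus_carrier_mat[OF K] v q])
  also have "\<dots> = (\<Sum>j<c. - (K $$ (q,j) * v $ j))" using K q by (intro sum.cong refl) auto
  also have "\<dots> = - (\<Sum>j<c. K $$ (q,j) * v $ j)" by (rule sum_negf)
  also have "\<dots> = - ((K *\<^sub>v v) $ q)" using mult_mat_vec_sum[OF K v q] by simp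
  finally show ?thesis .
qed

lemma final_kernel:
  fixes A B P :: "'a::conjugatable_ordered_field mat"
  assumes n: "n > 0" and A: "A \<in> carrier_mat n n" and B: "B \<in> carrier_mat n n"
  and C: "\<forall>l<m. C l \<in> carrier_mat n n" and P: "P \<in> carrier_mat m m" and Pinv: "invertible_mat P"
  and hB: "mat_adjoint B \<in> span_C_I n m C"
  and hA: "\<forall>l<m. C l * mat_adjoint A \<in> span_C_I n m C"
  and Rs: "set Rs \<subseteq> carrier_mat n n"
  shows "mat_kernel (L_Rs n m C P Rs) \<subseteq> mat_kernel (M_Rs n m C P A B Rs)"
proof
  fix x assume xk: "x \<in> mat_kernel (L_Rs n m C P Rs)"
  define k where "k = length Rs"
  define R where "R i = Rs ! i" for i
  define v where "v i = subv n x i" for i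
  have Ri: "\<forall>i<k. R i \<in> carrier_mat n n" using Rs by (auto simp: R_def k_def)
  have vi: "\<forall>i<k. v i \<in> carrier_vec n" by (simp add: v_def subv_def)
  have LRc: "\<And>X. X \<in> carrier_mat n n \<Longrightarrow> L_R n m C P X \<in> carrier_mat (n + m*n) n"
    unfolding L_R_def by (rule vstack_carrier, simp, rule mult_carrier_mat[OF kron_carrier stackC_carrier])
  have MRc: "\<And>X. X \<in> carrier_mat n n \<Longrightarrow> M_R n m C P A B X \<in> carrier_mat (n + m*n) n"
    unfolding M_R_def using B
    by (intro vstack_carrier) (auto intro!: uminus_carrier_mat mult_carrier_mat[OF kron_carrier stackC_carrier])
  have Lc: "L_Rs n m C P Rs \<in> carrier_mat (n+m*n) (k*n)" by (simp add: L_Rs_def hcat_def k_def)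
  have Mc: "M_Rs n m C P A B Rs \<in> carrier_mat (n+m*n) (k*n)" by (simp add: M_Rs_def hcat_def k_def)
  have x: "x \<in> carrier_vec (k*n)" and Lx: "L_Rs n m C P Rs *\<^sub>v x = 0\<^sub>v (n+m*n)"
    using xk Lc unfolding mat_kernel_def by auto
  have Lsum: "\<And>q. q < n+m*n \<Longrightarrow> (\<Sum>i<k. (L_R n m C P (R i) *\<^sub>v v i) $ q) = 0"
  proof -
    fix q assume q: "q < n+m*n"
    have "(L_Rs n m C P Rs *\<^sub>v x) $ q = 0" using Lx q by simp
    moreover have "(L_Rs n m C P Rs *\<^sub>v x) $ q = (\<Sum>i<k. (L_R n m C P (R i) *\<^sub>v v i) $ q)"
      unfolding L_Rs_def using hcat_mult[OF n _ _ q, of "map (L_R n m C P) Rs" x] x Rs LRc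
      by (auto simp: k_def R_def v_def)
    ultimately show "(\<Sum>i<k. (L_R n m C P (R i) *\<^sub>v v i) $ q) = 0" by simp
  qed
  have pr: "\<And>p r. p < m \<Longrightarrow> r < n \<Longrightarrow> p*n+r < m*n"
  proof -
    fix p r assume "p < m" "r < n"
    moreover have "Suc p * n \<le> m * n" using \<open>p < m\<close> by (intro mult_le_mono1) auto
    ultimately show "p*n+r < m*n" by simp
  qed
  define G where "G Y = (\<forall>r<n. (\<Sum>i<k. ((R i * Y) *\<^sub>v v i) $ r) = 0)" for Y
  have G1: "G (1\<^sub>m n)"
    unfolding G_def
  proof (intro allI impI)
    fix r assume r: "r < n"
    have "(\<Sum>i<k. ((R i * 1\<^sub>m n) *\<^sub>v v i) $ r) = (\<Sum>i<k. (L_R n m C P (R i) *\<^sub>v v i) $ r)"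
    proof (rule sum.cong[OF refl])
      fix i assume i: "i \<in> {..<k}"
      have Rc: "R i \<in> carrier_mat n n" using Ri i by auto
      show "((R i * 1\<^sub>m n) *\<^sub>v v i) $ r = (L_R n m C P (R i) *\<^sub>v v i) $ r"
        unfolding L_R_def
        using vstack_mult[OF Rc mult_carrier_mat[OF kron_carrier stackC_carrier] _, of "v i" r] vi i r Rc
        by simp
    qed
    then show "(\<Sum>i<k. ((R i * 1\<^sub>m n) *\<^sub>v v i) $ r) = 0" using Lsum[of r] r by simp
  qed
  have GC: "G (mat_adjoint (C l))" if l: "l < m" for l
    unfolding G_def
  proof (intro allI impI)
    fix r assume r: "r < n"
    define u where "u l' = (\<Sum>i<k. ((R i * mat_adjoint (C l')) *\<^sub>v v i) $ r)" for l'
    have "\<forall>p<m. (\<Sum>l'<m. P $$ (p,l') * u l') = 0"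
    proof (intro allI impI)
      fix p assume p: "p < m"
      have q: "n + (p*n+r) < n+m*n" using pr[OF p r] by simp
      have "(\<Sum>i<k. (L_R n m C P (R i) *\<^sub>v v i) $ (n + (p*n+r))) = (\<Sum>i<k. \<Sum>l'<m. P $$ (p,l') * ((R i * mat_adjoint (C l')) *\<^sub>v v i) $ r)"
      proof (rule sum.cong[OF refl])
        fix i assume i: "i \<in> {..<k}"
        have Rc: "R i \<in> carrier_mat n n" using Ri i by auto
        have vc: "v i \<in> carrier_vec n" using vi i by auto
        show "(L_R n m C P (R i) *\<^sub>v v i) $ (n + (p*n+r)) = (\<Sum>l'<m. P $$ (p,l') * ((R i * mat_adjoint (C l')) *\<^sub>v v i) $ r)"
          unfolding L_R_def
          using vstack_mult[OF Rc mult_carrier_mat[OF kron_carrier stackC_carrier] vc q]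
            kron_stack_mult[OF n Rc C p r vc] by simp
      qed
      also have "\<dots> = (\<Sum>l'<m. P $$ (p,l') * u l')"
        unfolding u_def by (subst sum.swap) (simp add: sum_distrib_left)
      finally show "(\<Sum>l'<m. P $$ (p,l') * u l') = 0" using Lsum[OF q] by simp
    qed
    from inv_kill[OF P Pinv this l] show "(\<Sum>i<k. ((R i * mat_adjoint (C l)) *\<^sub>v v i) $ r) = 0"
      by (simp add: u_def)
  qed
  define D where "D k' = (if k' < m then C k' else 1\<^sub>m n)" for k'
  have Dc: "\<forall>j<Suc m. D j \<in> carrier_mat n n" using C by (auto simp: D_def)
  have Dadjc: "\<forall>j<Suc m. mat_adjoint (D j) \<in> carrier_mat n n" using Dc by auto
  have GD: "\<forall>j<Suc m. G (mat_adjoint (D j))" using G1 GC by (auto simp: D_def)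
  have Gspan: "G Y" if Y: "Y \<in> carrier_mat n n" and hY: "mat_adjoint Y \<in> span_C_I n m C" for Y
  proof -
    obtain c where c: "mat_adjoint Y = lc n (Suc m) c D" using hY unfolding span_C_I_lc D_def by auto
    have "Y = mat_adjoint (lc n (Suc m) c D)" using c by (metis adj_adj)
    also have "\<dots> = lc n (Suc m) (\<lambda>j. conjugate (c j)) (\<lambda>j. mat_adjoint (D j))"
      by (rule adj_lc[OF Dc])
    finally have Ye: "Y = lc n (Suc m) (\<lambda>j. conjugate (c j)) (\<lambda>j. mat_adjoint (D j))" .
    show ?thesis unfolding G_def Ye
      using G_lc[OF Ri vi Dadjc] GD unfolding G_def by blast
  qed
  have GB: "G B" by (rule Gspan[OF B hB])
  have GA: "G (A * mat_adjoint (C l))" if l: "l < m" for l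
  proof (rule Gspan)
    show "A * mat_adjoint (C l) \<in> carrier_mat n n" using A C l by auto
    have "mat_adjoint (A * mat_adjoint (C l)) = C l * mat_adjoint A"
      using adj_mult[OF A adj_carrier[of "C l" n n]] C l by (simp add: adj_adj)
    then show "mat_adjoint (A * mat_adjoint (C l)) \<in> span_C_I n m C" using hA l by simp
  qed
  have Mrow: "(M_Rs n m C P A B Rs *\<^sub>v x) $ q = 0" if q: "q < n+m*n" for q
  proof -
    have "(M_Rs n m C P A B Rs *\<^sub>v x) $ q = (\<Sum>i<k. (M_R n m C P A B (R i) *\<^sub>v v i) $ q)"
      unfolding M_Rs_def using hcat_mult[OF n _ _ q, of "map (M_R n m C P A B) Rs" x] x Rs MRc
      by (auto simp: k_def R_def v_def)
    also have "\<dots> = 0"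
    proof (cases "q < n")
      case True
      have "(\<Sum>i<k. (M_R n m C P A B (R i) *\<^sub>v v i) $ q) = (\<Sum>i<k. ((R i * B) *\<^sub>v v i) $ q)"
      proof (rule sum.cong[OF refl])
        fix i assume i: "i \<in> {..<k}"
        have Rc: "R i \<in> carrier_mat n n" using Ri i by auto
        have vc: "v i \<in> carrier_vec n" using vi i by auto
        have Kc: "- (kron m n P (R i * A) * stackC n m C) \<in> carrier_mat (m*n) n"
          by (intro uminus_carrier_mat mult_carrier_mat[OF kron_carrier stackC_carrier])
        show "(M_R n m C P A B (R i) *\<^sub>v v i) $ q = ((R i * B) *\<^sub>v v i) $ q"
          unfolding M_R_def using vstack_mult[OF mult_carrier_mat[OF Rc B] Kc vc q] True by simp
      qed
      then show ?thesis using GB True unfolding G_def by simp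
    next
      case False
      define p where "p = (q - n) div n"
      define r where "r = (q - n) mod n"
      have qe: "q = n + (p*n + r)" using False by (simp add: p_def r_def)
      have r: "r < n" using n by (simp add: r_def)
      have p: "p < m" using q False n by (simp add: p_def less_mult_imp_div_less)
      have "(\<Sum>i<k. (M_R n m C P A B (R i) *\<^sub>v v i) $ q) = (\<Sum>i<k. - (\<Sum>l<m. P $$ (p,l) * ((R i * (A * mat_adjoint (C l))) *\<^sub>v v i) $ r))"
      proof (rule sum.cong[OF refl])
        fix i assume i: "i \<in> {..<k}"
        have Rc: "R i \<in> carrier_mat n n" using Ri i by auto
        have RA: "R i * A \<in> carrier_mat n n" using Rc A by auto
        have vc: "v i \<in> carrier_vec n" using vi i by auto
        have K: "kron m n P (R i * A) * stackC n m C \<in> carrier_mat (m*n) n"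
          by (intro mult_carrier_mat[OF kron_carrier stackC_carrier])
        have "(M_R n m C P A B (R i) *\<^sub>v v i) $ q = ((- (kron m n P (R i * A) * stackC n m C)) *\<^sub>v v i) $ (p*n+r)"
          unfolding M_R_def using vstack_mult[OF mult_carrier_mat[OF Rc B] uminus_carrier_mat[OF K] vc] q qe by simp
        also have "\<dots> = - (\<Sum>l<m. P $$ (p,l) * (((R i * A) * mat_adjoint (C l)) *\<^sub>v v i) $ r)"
          using uminus_mat_vec[OF K vc pr[OF p r]] kron_stack_mult[OF n RA C p r vc] by simp
        also have "\<dots> = - (\<Sum>l<m. P $$ (p,l) * ((R i * (A * mat_adjoint (C l))) *\<^sub>v v i) $ r)"
        proof (intro arg_cong[of _ _ uminus] sum.cong refl)
          fix l assume "l \<in> {..<m}"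
          hence "C l \<in> carrier_mat n n" using C by auto
          hence "R i * A * mat_adjoint (C l) = R i * (A * mat_adjoint (C l))"
            using assoc_mult_mat[OF Rc A adj_carrier] by blast
          thus "P $$ (p,l) * (((R i * A) * mat_adjoint (C l)) *\<^sub>v v i) $ r = P $$ (p,l) * ((R i * (A * mat_adjoint (C l))) *\<^sub>v v i) $ r" by simp
        qed
        finally show "(M_R n m C P A B (R i) *\<^sub>v v i) $ q = - (\<Sum>l<m. P $$ (p,l) * ((R i * (A * mat_adjoint (C l))) *\<^sub>v v i) $ r)" .
      qed
      also have "\<dots> = - (\<Sum>l<m. P $$ (p,l) * (\<Sum>i<k. ((R i * (A * mat_adjoint (C l))) *\<^sub>v v i) $ r))"
        by (simp add: sum_negf sum_distrib_left) (rule sum.swap)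
      also have "\<dots> = 0" using GA r unfolding G_def by simp
      finally show ?thesis .
    qed
    finally show ?thesis .
  qed
  show "x \<in> mat_kernel (M_Rs n m C P A B Rs)"
    using Mc x Mrow by (intro mat_kernelI[OF Mc x]) (intro eq_vecI, auto)
qed

lemma commutant_carrier: "commutant n S \<subseteq> carrier_mat n n" by (auto simp: commutant_def)
lemma bicomm_carrier: "bicomm n A \<subseteq> carrier_mat n n" by (auto simp: bicomm_def commutant_def)

lemma self_bicomm: "A \<in> carrier_mat n n \<Longrightarrow> A \<in> bicomm n A"
  by (auto simp: bicomm_def commutant_def)

lemma bicomm_mult: assumes X: "X \<in> bicomm n A" and Y: "Y \<in> bicomm n A"
  shows "X * Y \<in> bicomm n A"
proof -
  have Xc: "X \<in> carrier_mat n n" and Yc: "Y \<in> carrier_mat n n" using X Y bicomm_carrier by auto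
  { fix Z assume Z: "Z \<in> commutant n {A}"
    have Zc: "Z \<in> carrier_mat n n" using Z by (auto simp: commutant_def)
    have XZ: "X * Z = Z * X" and YZ: "Y * Z = Z * Y" using X Y Z by (auto simp: bicomm_def commutant_def)
    have "X * Y * Z = X * (Y * Z)" using Xc Yc Zc by (simp add: assoc_mult_mat)
    also have "\<dots> = X * (Z * Y)" using YZ by simp
    also have "\<dots> = (X * Z) * Y" using Xc Yc Zc by (simp add: assoc_mult_mat)
    also have "\<dots> = Z * X * Y" using XZ by simp
    also have "\<dots> = Z * (X * Y)" using Xc Yc Zc by (simp add: assoc_mult_mat)
    finally have "X * Y * Z = Z * (X * Y)" . }
  thus ?thesis using Xc Yc unfolding bicomm_def commutant_def[of n "commutant n {A}"] by auto
qed

lemma commutant_adj: assumes A: "A \<in> carrier_mat n n" and Z: "Z \<in> commutant n {mat_adjoint A}"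
  shows "mat_adjoint Z \<in> commutant n {A}"
proof -
  have Zc: "Z \<in> carrier_mat n n" and ZA: "Z * mat_adjoint A = mat_adjoint A * Z"
    using Z by (auto simp: commutant_def)
  have "mat_adjoint Z * A = mat_adjoint (mat_adjoint A * Z)"
    using adj_mult[OF adj_carrier[OF A] Zc] by (simp add: adj_adj)
  also have "\<dots> = mat_adjoint (Z * mat_adjoint A)" using ZA by simp
  also have "\<dots> = A * mat_adjoint Z" using adj_mult[OF Zc adj_carrier[OF A]] by (simp add: adj_adj)
  finally show ?thesis using Zc by (auto simp: commutant_def)
qed

lemma bicomm_adj: assumes A: "A \<in> carrier_mat n n" and Y: "Y \<in> bicomm n A"
  shows "mat_adjoint Y \<in> bicomm n (mat_adjoint A)"
proof -
  have Yc: "Y \<in> carrier_mat n n" using Y bicomm_carrier by auto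
  { fix Z assume Z: "Z \<in> commutant n {mat_adjoint A}"
    have Zc: "Z \<in> carrier_mat n n" using Z by (auto simp: commutant_def)
    have "mat_adjoint Z \<in> commutant n {A}" by (rule commutant_adj[OF A Z])
    hence YZ: "Y * mat_adjoint Z = mat_adjoint Z * Y" using Y by (auto simp: bicomm_def commutant_def)
    have "mat_adjoint Y * Z = mat_adjoint (mat_adjoint Z * Y)"
      using adj_mult[OF adj_carrier[OF Zc] Yc] by (simp add: adj_adj)
    also have "\<dots> = mat_adjoint (Y * mat_adjoint Z)" using YZ by simp
    also have "\<dots> = Z * mat_adjoint Y" using adj_mult[OF Yc adj_carrier[OF Zc]] by (simp add: adj_adj)
    finally have "mat_adjoint Y * Z = Z * mat_adjoint Y" . }
  thus ?thesis using Yc unfolding bicomm_def commutant_def[of n "commutant n {mat_adjoint A}"] by auto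
qed

lemma C_in_span: assumes C: "C l \<in> carrier_mat n n" and l: "l < m"
  shows "C l \<in> span_C_I n m C"
proof -
  let ?D = "\<lambda>k. if k < m then C k else 1\<^sub>m n"
  have "lc n (Suc m) (\<lambda>k. if k = l then 1 else 0) ?D = C l"
  proof (rule eq_matI)
    fix a b assume a: "a < dim_row (C l)" and b: "b < dim_col (C l)"
    have "(\<Sum>k<Suc m. (if k = l then 1 else 0) * ?D k $$ (a,b)) = ?D l $$ (a,b)"
    proof -
      have "(\<Sum>k<Suc m. (if k = l then 1 else 0) * ?D k $$ (a,b)) = (\<Sum>k<Suc m. if k = l then ?D k $$ (a,b) else 0)"
        by (rule sum.cong) auto
      also have "\<dots> = ?D l $$ (a,b)" using l by (simp add: sum.delta)
      finally show ?thesis .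
    qed
    thus "lc n (Suc m) (\<lambda>k. if k = l then 1 else 0) ?D $$ (a,b) = C l $$ (a,b)"
      using a b C l by (simp add: lc_def)
  qed (use C in \<open>auto simp: lc_def\<close>)
  hence "\<exists>c. C l = lc n (Suc m) c ?D \<and> True" by metis
  thus ?thesis unfolding span_C_I_lc by (rule CollectI)
qed

lemma kernel_n0: assumes "n = 0"
  shows "mat_kernel (L_Rs n m C P Rs) \<subseteq> mat_kernel (M_Rs n m C P A B Rs)"
  using assms by (auto simp: mat_kernel_def M_Rs_def L_Rs_def hcat_def)

lemma main_from_span:
  fixes A B P :: "'a::conjugatable_ordered_field mat"
  assumes A: "A \<in> carrier_mat n n" and B: "B \<in> carrier_mat n n" and Bb: "B \<in> bicomm n A"
  and C: "\<forall>l<m. C l \<in> carrier_mat n n" and P: "P \<in> carrier_mat m m" and Pinv: "invertible_mat P"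
  and Cb: "\<forall>l<m. C l \<in> bicomm n (mat_adjoint A)"
  and sp: "bicomm n (mat_adjoint A) \<subseteq> span_C_I n m C"
  and Rs: "set Rs \<subseteq> carrier_mat n n"
  shows "mat_kernel (L_Rs n m C P Rs) \<subseteq> mat_kernel (M_Rs n m C P A B Rs)"
proof (cases "n = 0")
  case True then show ?thesis by (rule kernel_n0)
next
  case False
  have Aa: "mat_adjoint A \<in> bicomm n (mat_adjoint A)" using A by (intro self_bicomm) auto
  show ?thesis
  proof (rule final_kernel[OF _ A B C P Pinv _ _ Rs])
    show "n > 0" using False by simp
    show "mat_adjoint B \<in> span_C_I n m C" using sp bicomm_adj[OF A Bb] by auto
    show "\<forall>l<m. C l * mat_adjoint A \<in> span_C_I n m C"
      using sp bicomm_mult[OF _ Aa] Cb by blast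
  qed
qed

lemma triple: assumes F: "F \<in> carrier_mat n n" and V: "V \<in> carrier_mat n n" and G: "G \<in> carrier_mat n n"
  and i: "i < n" and j: "j < n"
  shows "(F * V * mat_adjoint G) $$ (i,j) = (\<Sum>a<n. \<Sum>b<n. F $$ (i,a) * V $$ (a,b) * conjugate (G $$ (j,b)))"
proof -
  have "(F * V * mat_adjoint G) $$ (i,j) = (\<Sum>b<n. (F * V) $$ (i,b) * mat_adjoint G $$ (b,j))"
    using F V G i j by (simp add: scalar_prod_def lessThan_atLeast0)
  also have "\<dots> = (\<Sum>b<n. \<Sum>a<n. F $$ (i,a) * V $$ (a,b) * conjugate (G $$ (j,b)))"
    using F V G i j by (intro sum.cong refl) (simp add: scalar_prod_def lessThan_atLeast0 sum_distrib_right)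
  also have "\<dots> = (\<Sum>a<n. \<Sum>b<n. F $$ (i,a) * V $$ (a,b) * conjugate (G $$ (j,b)))"
    by (rule sum.swap)
  finally show ?thesis .
qed

lemma hill_sum_index: "i < n \<Longrightarrow> j < n \<Longrightarrow> hill_sum n m C H V $$ (i,j) = (\<Sum>k<m. \<Sum>l<m. H $$ (k,l) * (C k * V * mat_adjoint (C l)) $$ (i,j))"
  by (simp add: hill_sum_def)

lemma hill_sum_carrier[simp]: "hill_sum n m C H V \<in> carrier_mat n n"
  by (simp add: hill_sum_def)

lemma hill_sum_dims[simp]: "dim_row (hill_sum n m C H V) = n" "dim_col (hill_sum n m C H V) = n"
  by (simp_all add: hill_sum_def)

lemma bilin: fixes s t :: "nat \<Rightarrow> 'a::conjugatable_field"
  assumes C': "\<forall>p<d. C' p \<in> carrier_mat n n" and V: "V \<in> carrier_mat n n"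
  and i: "i < n" and j: "j < n"
  shows "(lc n d s C' * V * mat_adjoint (lc n d t C')) $$ (i,j) =
    (\<Sum>p<d. \<Sum>q<d. s p * conjugate (t q) * (C' p * V * mat_adjoint (C' q)) $$ (i,j))"
proof -
  let ?f = "\<lambda>a b p q. s p * conjugate (t q) * (C' p $$ (i,a) * V $$ (a,b) * conjugate (C' q $$ (j,b)))"
  have "(lc n d s C' * V * mat_adjoint (lc n d t C')) $$ (i,j) =
     (\<Sum>a<n. \<Sum>b<n. lc n d s C' $$ (i,a) * V $$ (a,b) * conjugate (lc n d t C' $$ (j,b)))"
    by (rule triple[OF lc_carrier V lc_carrier i j])
  also have "\<dots> = (\<Sum>a<n. \<Sum>b<n. \<Sum>p<d. \<Sum>q<d. ?f a b p q)"
    using i j by (intro sum.cong refl)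
      (simp add: lc_def sum_conjugate conjugate_dist_mul sum_distrib_left sum_distrib_right mult_ac)
  also have "\<dots> = (\<Sum>a<n. \<Sum>p<d. \<Sum>b<n. \<Sum>q<d. ?f a b p q)"
    by (rule sum.cong[OF refl], rule sum.swap)
  also have "\<dots> = (\<Sum>p<d. \<Sum>a<n. \<Sum>b<n. \<Sum>q<d. ?f a b p q)"
    by (rule sum.swap)
  also have "\<dots> = (\<Sum>p<d. \<Sum>a<n. \<Sum>q<d. \<Sum>b<n. ?f a b p q)"
    by (rule sum.cong[OF refl], rule sum.cong[OF refl], rule sum.swap)
  also have "\<dots> = (\<Sum>p<d. \<Sum>q<d. \<Sum>a<n. \<Sum>b<n. ?f a b p q)"
    by (rule sum.cong[OF refl], rule sum.swap)
  also have "\<dots> = (\<Sum>p<d. \<Sum>q<d. s p * conjugate (t q) * (C' p * V * mat_adjoint (C' q)) $$ (i,j))"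
  proof (intro sum.cong refl)
    fix p q assume p: "p \<in> {..<d}" and q: "q \<in> {..<d}"
    have "(C' p * V * mat_adjoint (C' q)) $$ (i,j) = (\<Sum>a<n. \<Sum>b<n. C' p $$ (i,a) * V $$ (a,b) * conjugate (C' q $$ (j,b)))"
      using C' p q by (intro triple[OF _ V _ i j]) auto
    thus "(\<Sum>a<n. \<Sum>b<n. ?f a b p q) = s p * conjugate (t q) * (C' p * V * mat_adjoint (C' q)) $$ (i,j)"
      by (simp add: sum_distrib_left)
  qed
  finally show ?thesis .
qed

lemma hill_transform:
  fixes H :: "'a::conjugatable_ordered_field mat"
  assumes C': "\<forall>p<d. C' p \<in> carrier_mat n n" and CT: "\<forall>k<m. C k = lc n d (T k) C'"
  and V: "V \<in> carrier_mat n n"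
  shows "hill_sum n m C H V = hill_sum n d C' (mat d d (\<lambda>(p,q). \<Sum>k<m. \<Sum>l<m. T k p * H $$ (k,l) * conjugate (T l q))) V"
proof (rule eq_matI)
  fix i j assume i: "i < dim_row (hill_sum n d C' (mat d d (\<lambda>(p,q). \<Sum>k<m. \<Sum>l<m. T k p * H $$ (k,l) * conjugate (T l q))) V)"
    and j: "j < dim_col (hill_sum n d C' (mat d d (\<lambda>(p,q). \<Sum>k<m. \<Sum>l<m. T k p * H $$ (k,l) * conjugate (T l q))) V)"
  hence i: "i < n" and j: "j < n" by (auto simp: hill_sum_def)
  define M where "M p q = (C' p * V * mat_adjoint (C' q)) $$ (i,j)" for p q
  let ?g = "\<lambda>k l p q. H $$ (k,l) * (T k p * conjugate (T l q) * M p q)"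
  have "hill_sum n m C H V $$ (i,j) = (\<Sum>k<m. \<Sum>l<m. H $$ (k,l) * (C k * V * mat_adjoint (C l)) $$ (i,j))"
    by (rule hill_sum_index[OF i j])
  also have "\<dots> = (\<Sum>k<m. \<Sum>l<m. \<Sum>p<d. \<Sum>q<d. ?g k l p q)"
  proof (intro sum.cong refl)
    fix k l assume k: "k \<in> {..<m}" and l: "l \<in> {..<m}"
    have "(C k * V * mat_adjoint (C l)) $$ (i,j) = (\<Sum>p<d. \<Sum>q<d. T k p * conjugate (T l q) * M p q)"
      using CT k l bilin[OF C' V i j] by (simp add: M_def)
    thus "H $$ (k,l) * (C k * V * mat_adjoint (C l)) $$ (i,j) = (\<Sum>p<d. \<Sum>q<d. ?g k l p q)"
      by (simp add: sum_distrib_left)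
  qed
  also have "\<dots> = (\<Sum>k<m. \<Sum>p<d. \<Sum>l<m. \<Sum>q<d. ?g k l p q)"
    by (rule sum.cong[OF refl], rule sum.swap)
  also have "\<dots> = (\<Sum>p<d. \<Sum>k<m. \<Sum>l<m. \<Sum>q<d. ?g k l p q)"
    by (rule sum.swap)
  also have "\<dots> = (\<Sum>p<d. \<Sum>k<m. \<Sum>q<d. \<Sum>l<m. ?g k l p q)"
    by (rule sum.cong[OF refl], rule sum.cong[OF refl], rule sum.swap)
  also have "\<dots> = (\<Sum>p<d. \<Sum>q<d. \<Sum>k<m. \<Sum>l<m. ?g k l p q)"
    by (rule sum.cong[OF refl], rule sum.swap)
  also have "\<dots> = (\<Sum>p<d. \<Sum>q<d. (mat d d (\<lambda>(p,q). \<Sum>k<m. \<Sum>l<m. T k p * H $$ (k,l) * conjugate (T l q))) $$ (p,q) * M p q)"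
    by (intro sum.cong refl) (simp add: sum_distrib_right sum_distrib_left mult_ac)
  also have "\<dots> = hill_sum n d C' (mat d d (\<lambda>(p,q). \<Sum>k<m. \<Sum>l<m. T k p * H $$ (k,l) * conjugate (T l q))) V $$ (i,j)"
    using i j by (simp add: hill_sum_def M_def)
  finally show "hill_sum n m C H V $$ (i,j) = hill_sum n d C' (mat d d (\<lambda>(p,q). \<Sum>k<m. \<Sum>l<m. T k p * H $$ (k,l) * conjugate (T l q))) V $$ (i,j)" .
qed (auto simp: hill_sum_def)

definition idx :: "nat \<Rightarrow> nat \<Rightarrow> nat" where "idx j p = (if p < j then p else Suc p)"

lemma idx_bij: assumes j: "j < m" shows "bij_betw (idx j) {..<m-1} ({..<m} - {j})"
proof (rule bij_betw_imageI)
  show "inj_on (idx j) {..<m-1}" by (auto simp: inj_on_def idx_def split: if_splits)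
  show "idx j ` {..<m-1} = {..<m} - {j}"
  proof
    show "idx j ` {..<m-1} \<subseteq> {..<m} - {j}" using j by (auto simp: idx_def)
    show "{..<m} - {j} \<subseteq> idx j ` {..<m-1}"
    proof
      fix l assume l: "l \<in> {..<m} - {j}"
      show "l \<in> idx j ` {..<m-1}"
      proof (cases "l < j")
        case True thus ?thesis using l j by (intro image_eqI[of _ _ l]) (auto simp: idx_def)
      next
        case False thus ?thesis using l j by (intro image_eqI[of _ _ "l - 1"]) (auto simp: idx_def)
      qed
    qed
  qed
qed

lemma idx_sum: assumes j: "j < m" shows "(\<Sum>p<m-1. f (idx j p)) = (\<Sum>l\<in>{..<m} - {j}. f l)"
  using sum.reindex_bij_betw[OF idx_bij[OF j], of f] by simp

lemma idx_lt: "j < m \<Longrightarrow> p < m - 1 \<Longrightarrow> idx j p < m" by (auto simp: idx_def)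

lemma min_indep:
  fixes C :: "nat \<Rightarrow> 'a::conjugatable_ordered_field mat"
  assumes mh: "min_hill_rep n \<Phi> m C H"
  and h: "\<forall>a<n. \<forall>b<n. (\<Sum>l<m. c l * C l $$ (a,b)) = 0" and j: "j < m"
  shows "c j = 0"
proof (rule ccontr)
  assume cj: "c j \<noteq> 0"
  have hr: "hill_rep n \<Phi> m C H" using mh by (simp add: min_hill_rep_def)
  hence Cc: "\<forall>k<m. C k \<in> carrier_mat n n" and Hc: "H \<in> carrier_mat m m"
    and Phi: "\<forall>V\<in>carrier_mat n n. \<Phi> V = hill_sum n m C H V" by (auto simp: hill_rep_def)
  define C' where "C' p = C (idx j p)" for p
  define T where "T k p = (if k = j then - (c (idx j p) / c j) else if k = idx j p then 1 else 0)" for k p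
  have C'c: "\<forall>p<m-1. C' p \<in> carrier_mat n n" using Cc idx_lt[OF j] by (auto simp: C'_def)
  have CT: "\<forall>k<m. C k = lc n (m-1) (T k) C'"
  proof (intro allI impI eq_matI)
    fix k a b assume k: "k < m" and a: "a < dim_row (lc n (m-1) (T k) C')" and b: "b < dim_col (lc n (m-1) (T k) C')"
    hence a: "a < n" and b: "b < n" by (auto simp: lc_def)
    have "lc n (m-1) (T k) C' $$ (a,b) = (\<Sum>p<m-1. T k p * C (idx j p) $$ (a,b))"
      using a b by (simp add: lc_def C'_def)
    also have "\<dots> = (\<Sum>l\<in>{..<m}-{j}. (if k = j then - (c l / c j) else if k = l then 1 else 0) * C l $$ (a,b))"
      unfolding T_def by (rule idx_sum[OF j, of "\<lambda>l. (if k = j then - (c l / c j) else if k = l then 1 else 0) * C l $$ (a,b)"])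
    also have "\<dots> = C k $$ (a,b)"
    proof (cases "k = j")
      case True
      have split: "(\<Sum>l<m. c l * C l $$ (a,b)) = c j * C j $$ (a,b) + (\<Sum>l\<in>{..<m}-{j}. c l * C l $$ (a,b))"
        using j by (subst sum.remove[of _ j]) auto
      have "(\<Sum>l\<in>{..<m}-{j}. - (c l / c j) * C l $$ (a,b)) = - (\<Sum>l\<in>{..<m}-{j}. c l * C l $$ (a,b)) / c j"
        by (simp add: sum_divide_distrib[symmetric] sum_negf)
      also have "\<dots> = C j $$ (a,b)"
      proof -
        have "c j * C j $$ (a,b) + (\<Sum>l\<in>{..<m}-{j}. c l * C l $$ (a,b)) = 0" using split h a b by simp
        hence "- (\<Sum>l\<in>{..<m}-{j}. c l * C l $$ (a,b)) = c j * C j $$ (a,b)" by (metis add_eq_0_iff minus_minus)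
        thus ?thesis using cj by simp
      qed
      finally show ?thesis using True by simp
    next
      case False
      have "(\<Sum>l\<in>{..<m}-{j}. (if k = j then - (c l / c j) else if k = l then 1 else 0) * C l $$ (a,b))
          = (\<Sum>l\<in>{..<m}-{j}. if k = l then C l $$ (a,b) else 0)"
        using False by (intro sum.cong refl) auto
      also have "\<dots> = C k $$ (a,b)" using False k by (simp add: sum.delta)
      finally show ?thesis .
    qed
    finally show "C k $$ (a,b) = lc n (m-1) (T k) C' $$ (a,b)" by simp
  next
    fix k assume "k < m"
    thus "dim_row (C k) = dim_row (lc n (m-1) (T k) C')" "dim_col (C k) = dim_col (lc n (m-1) (T k) C')"
      using Cc by (auto simp: lc_def)
  qed
  define H' where "H' = mat (m-1) (m-1) (\<lambda>(p,q). \<Sum>k<m. \<Sum>l<m. T k p * H $$ (k,l) * conjugate (T l q))"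
  have "hill_rep n \<Phi> (m-1) C' H'"
    unfolding hill_rep_def
  proof (intro conjI ballI)
    show "H' \<in> carrier_mat (m-1) (m-1)" by (simp add: H'_def)
    show "\<forall>k<m-1. C' k \<in> carrier_mat n n" by (rule C'c)
    fix V :: "'a mat" assume V: "V \<in> carrier_mat n n"
    show "\<Phi> V = hill_sum n (m-1) C' H' V"
      using Phi V hill_transform[OF C'c CT V] by (simp add: H'_def)
  qed
  hence "m \<le> m - 1" using mh unfolding min_hill_rep_def by blast
  thus False using j by simp
qed

definition Eu :: "nat \<Rightarrow> nat \<Rightarrow> nat \<Rightarrow> 'a::zero_neq_one mat" where
  "Eu n a b = mat n n (\<lambda>(x,y). if x = a \<and> y = b then 1 else 0)"

lemma Eu_carrier[simp]: "Eu n a b \<in> carrier_mat n n" by (simp add: Eu_def)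

lemma E_triple: assumes F: "F \<in> carrier_mat n n" and G: "G \<in> carrier_mat n n"
  and a: "a < n" and b: "b < n" and i: "i < n" and j: "j < n"
  shows "(F * Eu n a b * mat_adjoint G) $$ (i,j) = F $$ (i,a) * conjugate (G $$ (j,b))"
proof -
  have "(F * Eu n a b * mat_adjoint G) $$ (i,j) = (\<Sum>x<n. \<Sum>y<n. F $$ (i,x) * Eu n a b $$ (x,y) * conjugate (G $$ (j,y)))"
    by (rule triple[OF F Eu_carrier G i j])
  also have "\<dots> = (\<Sum>x<n. if x = a then F $$ (i,a) * conjugate (G $$ (j,b)) else 0)"
  proof (rule sum.cong[OF refl])
    fix x assume x: "x \<in> {..<n}"
    have "(\<Sum>y<n. F $$ (i,x) * Eu n a b $$ (x,y) * conjugate (G $$ (j,y))) = (\<Sum>y<n. if y = b then (if x = a then F $$ (i,a) * conjugate (G $$ (j,b)) else 0) else 0)"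
      using x by (intro sum.cong refl) (auto simp: Eu_def)
    also have "\<dots> = (if x = a then F $$ (i,a) * conjugate (G $$ (j,b)) else 0)" using b by (simp add: sum.delta)
    finally show "(\<Sum>y<n. F $$ (i,x) * Eu n a b $$ (x,y) * conjugate (G $$ (j,y))) = (if x = a then F $$ (i,a) * conjugate (G $$ (j,b)) else 0)" .
  qed
  also have "\<dots> = F $$ (i,a) * conjugate (G $$ (j,b))" using a by (simp add: sum.delta)
  finally show ?thesis .
qed

lemma right_inv_kill: fixes H K :: "'a::comm_ring_1 mat" assumes H: "H \<in> carrier_mat m m" and K: "K \<in> carrier_mat m m" and HK: "H * K = 1\<^sub>m m"
  and h: "\<forall>l<m. (\<Sum>k<m. d k * H $$ (k,l)) = 0" and k': "k' < m"
  shows "d k' = 0"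
proof -
  have "d k' = (\<Sum>k<m. d k * (H * K) $$ (k,k'))"
    using k' by (simp add: HK if_distrib[of "\<lambda>x. _ * x"] sum.delta cong: if_cong)
  also have "\<dots> = (\<Sum>k<m. \<Sum>l<m. d k * H $$ (k,l) * K $$ (l,k'))"
    using H K k' by (intro sum.cong refl) (simp add: scalar_prod_def lessThan_atLeast0 sum_distrib_left mult_ac)
  also have "\<dots> = (\<Sum>l<m. (\<Sum>k<m. d k * H $$ (k,l)) * K $$ (l,k'))"
    by (subst sum.swap) (simp add: sum_distrib_right)
  also have "\<dots> = 0" using h by simp
  finally show ?thesis .
qed

lemma C_bicomm:
  fixes A :: "'a::conjugatable_ordered_field mat"
  assumes mh: "min_hill_rep n \<Phi> m C H"
  and A: "A \<in> carrier_mat n n"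
  and K: "K \<in> carrier_mat m m" and HK: "H * K = 1\<^sub>m m"
  and modl: "\<forall>Z\<in>commutant n {mat_adjoint A}. \<forall>V\<in>carrier_mat n n. \<Phi> (Z * V) = Z * \<Phi> V"
  and k0: "k0 < m"
  shows "C k0 \<in> bicomm n (mat_adjoint A)"
proof -
  have hr: "hill_rep n \<Phi> m C H" using mh by (simp add: min_hill_rep_def)
  hence Cc: "\<forall>k<m. C k \<in> carrier_mat n n" and Hc: "H \<in> carrier_mat m m"
    and Phi: "\<forall>V\<in>carrier_mat n n. \<Phi> V = hill_sum n m C H V" by (auto simp: hill_rep_def)
  have comm: "C k0 * Z = Z * C k0" if Z: "Z \<in> commutant n {mat_adjoint A}" for Z
  proof -
    have Zc: "Z \<in> carrier_mat n n" using Z by (auto simp: commutant_def)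
    have ent: "(C k0 * Z) $$ (i,a) = (Z * C k0) $$ (i,a)" if i: "i < n" and a: "a < n" for i a
    proof -
      define d where "d k = (C k * Z) $$ (i,a) - (Z * C k) $$ (i,a)" for k
      define g where "g l = (\<Sum>k<m. d k * H $$ (k,l))" for l
      have key: "(\<Sum>l<m. conjugate (g l) * C l $$ (j,b)) = 0" if j: "j < n" and b: "b < n" for j b
      proof -
        have eq: "hill_sum n m C H (Z * Eu n a b) = Z * hill_sum n m C H (Eu n a b)"
          using modl Z Phi Zc by (metis Eu_carrier mult_carrier_mat)
        have L: "hill_sum n m C H (Z * Eu n a b) $$ (i,j) = (\<Sum>k<m. \<Sum>l<m. H $$ (k,l) * ((C k * Z) $$ (i,a) * conjugate (C l $$ (j,b))))"
          unfolding hill_sum_index[OF i j]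
        proof (intro sum.cong refl)
          fix k l assume k: "k \<in> {..<m}" and l: "l \<in> {..<m}"
          have Ck: "C k \<in> carrier_mat n n" and Cl: "C l \<in> carrier_mat n n" using Cc k l by auto
          have "C k * (Z * Eu n a b) = C k * Z * Eu n a b" using assoc_mult_mat[OF Ck Zc Eu_carrier, of a b] by simp
          thus "H $$ (k,l) * (C k * (Z * Eu n a b) * mat_adjoint (C l)) $$ (i,j) = H $$ (k,l) * ((C k * Z) $$ (i,a) * conjugate (C l $$ (j,b)))"
            using E_triple[OF mult_carrier_mat[OF Ck Zc] Cl a b i j] by simp
        qed
        have R: "(Z * hill_sum n m C H (Eu n a b)) $$ (i,j) = (\<Sum>k<m. \<Sum>l<m. H $$ (k,l) * ((Z * C k) $$ (i,a) * conjugate (C l $$ (j,b))))"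
        proof -
          have "(Z * hill_sum n m C H (Eu n a b)) $$ (i,j) = (\<Sum>x<n. Z $$ (i,x) * hill_sum n m C H (Eu n a b) $$ (x,j))"
            using Zc i j by (simp add: scalar_prod_def lessThan_atLeast0)
          also have "\<dots> = (\<Sum>x<n. \<Sum>k<m. \<Sum>l<m. Z $$ (i,x) * (H $$ (k,l) * (C k $$ (x,a) * conjugate (C l $$ (j,b)))))"
          proof (rule sum.cong[OF refl])
            fix x assume x: "x \<in> {..<n}"
            have "hill_sum n m C H (Eu n a b) $$ (x,j) = (\<Sum>k<m. \<Sum>l<m. H $$ (k,l) * (C k $$ (x,a) * conjugate (C l $$ (j,b))))"
              unfolding hill_sum_index[OF _ j, of x, OF x[simplified]]
            proof (intro sum.cong refl)
              fix k l assume k: "k \<in> {..<m}" and l: "l \<in> {..<m}"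
              have Ck: "C k \<in> carrier_mat n n" and Cl: "C l \<in> carrier_mat n n" using Cc k l by auto
              show "H $$ (k,l) * (C k * Eu n a b * mat_adjoint (C l)) $$ (x,j) = H $$ (k,l) * (C k $$ (x,a) * conjugate (C l $$ (j,b)))"
                using E_triple[OF Ck Cl a b _ j, of x] x by simp
            qed
            thus "Z $$ (i,x) * hill_sum n m C H (Eu n a b) $$ (x,j) = (\<Sum>k<m. \<Sum>l<m. Z $$ (i,x) * (H $$ (k,l) * (C k $$ (x,a) * conjugate (C l $$ (j,b)))))"
              by (simp add: sum_distrib_left)
          qed
          also have "\<dots> = (\<Sum>k<m. \<Sum>x<n. \<Sum>l<m. Z $$ (i,x) * (H $$ (k,l) * (C k $$ (x,a) * conjugate (C l $$ (j,b)))))"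
            by (rule sum.swap)
          also have "\<dots> = (\<Sum>k<m. \<Sum>l<m. \<Sum>x<n. Z $$ (i,x) * (H $$ (k,l) * (C k $$ (x,a) * conjugate (C l $$ (j,b)))))"
            by (rule sum.cong[OF refl], rule sum.swap)
          also have "\<dots> = (\<Sum>k<m. \<Sum>l<m. H $$ (k,l) * ((Z * C k) $$ (i,a) * conjugate (C l $$ (j,b))))"
          proof (intro sum.cong refl)
            fix k l assume k: "k \<in> {..<m}" and l: "l \<in> {..<m}"
            have Ck: "C k \<in> carrier_mat n n" using Cc k by auto
            have "(Z * C k) $$ (i,a) = (\<Sum>x<n. Z $$ (i,x) * C k $$ (x,a))"
              using Zc Ck i a by (simp add: scalar_prod_def lessThan_atLeast0)
            thus "(\<Sum>x<n. Z $$ (i,x) * (H $$ (k,l) * (C k $$ (x,a) * conjugate (C l $$ (j,b))))) = H $$ (k,l) * ((Z * C k) $$ (i,a) * conjugate (C l $$ (j,b)))"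
              by (simp add: sum_distrib_left sum_distrib_right mult_ac)
          qed
          finally show ?thesis .
        qed
        have "(\<Sum>k<m. \<Sum>l<m. H $$ (k,l) * ((C k * Z) $$ (i,a) * conjugate (C l $$ (j,b)))) =
              (\<Sum>k<m. \<Sum>l<m. H $$ (k,l) * ((Z * C k) $$ (i,a) * conjugate (C l $$ (j,b))))"
          using L R eq by simp
        hence "(\<Sum>k<m. \<Sum>l<m. H $$ (k,l) * (d k * conjugate (C l $$ (j,b)))) = 0"
          by (simp add: d_def algebra_simps sum_subtractf)
        hence z: "(\<Sum>l<m. \<Sum>k<m. H $$ (k,l) * (d k * conjugate (C l $$ (j,b)))) = 0"
          by (subst (asm) sum.swap)
        have "(\<Sum>l<m. g l * conjugate (C l $$ (j,b))) = (\<Sum>l<m. \<Sum>k<m. H $$ (k,l) * (d k * conjugate (C l $$ (j,b))))"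
          unfolding g_def sum_distrib_right by (simp add: mult_ac)
        hence "(\<Sum>l<m. g l * conjugate (C l $$ (j,b))) = 0" using z by simp
        hence "conjugate (\<Sum>l<m. g l * conjugate (C l $$ (j,b))) = 0" by simp
        thus ?thesis by (simp add: sum_conjugate conjugate_dist_mul)
      qed
      have "conjugate (g l) = 0" if l: "l < m" for l
        using min_indep[OF mh _ l, of "\<lambda>l. conjugate (g l)"] key by blast
      hence g0: "\<forall>l<m. g l = 0" by simp
      have "d k0 = 0" by (rule right_inv_kill[OF Hc K HK _ k0]) (use g0 in \<open>simp add: g_def\<close>)
      thus ?thesis by (simp add: d_def)
    qed
    show ?thesis using Cc k0 Zc ent by (intro eq_matI) auto
  qed
  show ?thesis unfolding bicomm_def commutant_def[of n "commutant n {mat_adjoint A}"]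
    using Cc k0 comm by auto
qed

lemma wide:
  fixes a :: "nat \<Rightarrow> nat \<Rightarrow> 'a::field"
  assumes MN: "M < N"
  shows "\<exists>c. (\<exists>i<N. c i \<noteq> 0) \<and> (\<forall>k<M. (\<Sum>i<N. a k i * c i) = 0)"
proof -
  define Mt where "Mt = mat N N (\<lambda>(k,i). if k < M then a k i else 0)"
  have Mc: "Mt \<in> carrier_mat N N" by (simp add: Mt_def)
  have N1: "N - 1 < N" using MN by simp
  have "multrow (N-1) 0 Mt = Mt"
    using MN by (intro eq_matI) (auto simp: Mt_def mat_multrow_gen_def)
  hence "det Mt = 0 * det Mt" using det_multrow[OF N1 Mc, of 0] by simp
  hence "det Mt = 0" by simp
  then obtain v where v: "v \<in> carrier_vec N" "v \<noteq> 0\<^sub>v N" "Mt *\<^sub>v v = 0\<^sub>v N"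
    using det_0_iff_vec_prod_zero[OF Mc] by blast
  have "\<exists>i<N. v $ i \<noteq> 0"
  proof (rule ccontr)
    assume "\<not> (\<exists>i<N. v $ i \<noteq> 0)"
    hence "v = 0\<^sub>v N" using v(1) by (intro eq_vecI) auto
    thus False using v(2) by simp
  qed
  moreover have "\<forall>k<M. (\<Sum>i<N. a k i * v $ i) = 0"
  proof (intro allI impI)
    fix k assume k: "k < M"
    have "(Mt *\<^sub>v v) $ k = 0" using v(3) k MN by simp
    moreover have "(Mt *\<^sub>v v) $ k = (\<Sum>i<N. Mt $$ (k,i) * v $ i)" using mult_mat_vec_sum[OF Mc v(1)] k MN by simp
    ultimately show "(\<Sum>i<N. a k i * v $ i) = 0" using k MN by (simp add: Mt_def)
  qed
  ultimately show ?thesis by blast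
qed

lemma lin_span_lc: "mat_lin_span n d D = {lc n d c D | c. True}"
  by (simp add: mat_lin_span_def lc_def)

lemma steinitz:
  fixes Y D :: "nat \<Rightarrow> 'a::conjugatable_ordered_field mat"
  assumes dN: "d < N" and Y: "\<forall>i<N. Y i \<in> mat_lin_span n d D"
  shows "\<exists>c. (\<exists>i<N. c i \<noteq> 0) \<and> (\<forall>a<n. \<forall>b<n. (\<Sum>i<N. c i * Y i $$ (a,b)) = 0)"
proof -
  have "\<forall>i<N. \<exists>e. Y i = lc n d e D" using Y unfolding lin_span_lc by blast
  then obtain e where e: "\<forall>i<N. Y i = lc n d (e i) D" by metis
  obtain c where c: "\<exists>i<N. c i \<noteq> 0" "\<forall>k<d. (\<Sum>i<N. e i k * c i) = 0"
    using wide[OF dN, of "\<lambda>k i. e i k"] by blast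
  have "\<forall>a<n. \<forall>b<n. (\<Sum>i<N. c i * Y i $$ (a,b)) = 0"
  proof (intro allI impI)
    fix a b assume a: "a < n" and b: "b < n"
    have "(\<Sum>i<N. c i * Y i $$ (a,b)) = (\<Sum>i<N. \<Sum>k<d. c i * (e i k * D k $$ (a,b)))"
      using e a b by (intro sum.cong refl) (simp add: lc_def sum_distrib_left)
    also have "\<dots> = (\<Sum>k<d. (\<Sum>i<N. e i k * c i) * D k $$ (a,b))"
      by (subst sum.swap) (intro sum.cong refl, simp add: sum_distrib_left sum_distrib_right mult_ac)
    also have "\<dots> = 0" using c(2) by simp
    finally show "(\<Sum>i<N. c i * Y i $$ (a,b)) = 0" .
  qed
  thus ?thesis using c(1) by blast
qed

definition indep :: "nat \<Rightarrow> nat \<Rightarrow> (nat \<Rightarrow> 'a::comm_ring_1 mat) \<Rightarrow> bool" where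
  "indep n d F \<longleftrightarrow> (\<forall>c. (\<forall>a<n. \<forall>b<n. (\<Sum>k<d. c k * F k $$ (a,b)) = 0) \<longrightarrow> (\<forall>k<d. c k = 0))"

lemma indep_bound:
  fixes F :: "nat \<Rightarrow> 'a::conjugatable_ordered_field mat"
  assumes ind: "indep n d F" and D: "\<forall>k<d. F k \<in> mat_lin_span n e G" shows "d \<le> e"
proof (rule ccontr)
  assume "\<not> d \<le> e" hence "e < d" by simp
  from steinitz[OF this D] obtain c where "\<exists>i<d. c i \<noteq> 0" "\<forall>a<n. \<forall>b<n. (\<Sum>i<d. c i * F i $$ (a,b)) = 0" by blast
  thus False using ind unfolding indep_def by blast
qed

lemma units_span: assumes Y: "Y \<in> carrier_mat n n" and n: "n > 0"
  shows "Y \<in> mat_lin_span n (n*n) (\<lambda>q. Eu n (q div n) (q mod n))"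
proof -
  have "Y = lc n (n*n) (\<lambda>q. Y $$ (q div n, q mod n)) (\<lambda>q. Eu n (q div n) (q mod n))"
  proof (rule eq_matI)
    fix a b assume a: "a < dim_row (lc n (n*n) (\<lambda>q. Y $$ (q div n, q mod n)) (\<lambda>q. Eu n (q div n) (q mod n)))"
      and b: "b < dim_col (lc n (n*n) (\<lambda>q. Y $$ (q div n, q mod n)) (\<lambda>q. Eu n (q div n) (q mod n)))"
    hence a: "a < n" and b: "b < n" by (auto simp: lc_def)
    have "lc n (n*n) (\<lambda>q. Y $$ (q div n, q mod n)) (\<lambda>q. Eu n (q div n) (q mod n)) $$ (a,b)
      = (\<Sum>q<n*n. Y $$ (q div n, q mod n) * Eu n (q div n) (q mod n) $$ (a,b))"
      using a b by (simp add: lc_def)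
    also have "\<dots> = (\<Sum>i<n. \<Sum>s<n. Y $$ ((i*n+s) div n, (i*n+s) mod n) * Eu n ((i*n+s) div n) ((i*n+s) mod n) $$ (a,b))"
      by (rule sum_split_mult)
    also have "\<dots> = (\<Sum>i<n. \<Sum>s<n. if i = a then (if s = b then Y $$ (a,b) else 0) else 0)"
      using a b n by (intro sum.cong refl) (auto simp: Eu_def)
    also have "\<dots> = (\<Sum>i<n. if i = a then Y $$ (a,b) else 0)"
    proof (rule sum.cong[OF refl])
      fix i show "(\<Sum>s<n. if i = a then (if s = b then Y $$ (a,b) else 0) else 0) = (if i = a then Y $$ (a,b) else 0)"
        using b by (cases "i = a") (simp_all add: sum.delta)
    qed
    also have "\<dots> = Y $$ (a,b)" using a by (simp add: sum.delta)
    finally show "Y $$ (a,b) = lc n (n*n) (\<lambda>q. Y $$ (q div n, q mod n)) (\<lambda>q. Eu n (q div n) (q mod n)) $$ (a,b)" by simp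
  qed (use Y in \<open>auto simp: lc_def\<close>)
  thus ?thesis unfolding lin_span_lc by blast
qed

lemma indep_extend:
  fixes F :: "nat \<Rightarrow> 'a::conjugatable_ordered_field mat"
  assumes ind: "indep n d F" and Yc: "Y \<in> carrier_mat n n" and Y: "Y \<notin> mat_lin_span n d F"
  shows "indep n (Suc d) (F(d := Y))"
  unfolding indep_def
proof (intro allI impI)
  fix c k assume h: "\<forall>a<n. \<forall>b<n. (\<Sum>k<Suc d. c k * (F(d := Y)) k $$ (a,b)) = 0" and k: "k < Suc d"
  have h': "\<forall>a<n. \<forall>b<n. (\<Sum>k<d. c k * F k $$ (a,b)) + c d * Y $$ (a,b) = 0"
    using h by simp
  have cd: "c d = 0"
  proof (rule ccontr)
    assume cd: "c d \<noteq> 0"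
    have "Y = lc n d (\<lambda>k. - c k / c d) F"
    proof (rule eq_matI)
      fix a b assume a: "a < dim_row (lc n d (\<lambda>k. - c k / c d) F)" and b: "b < dim_col (lc n d (\<lambda>k. - c k / c d) F)"
      hence a: "a < n" and b: "b < n" by (auto simp: lc_def)
      have e: "(\<Sum>k<d. c k * F k $$ (a,b)) + c d * Y $$ (a,b) = 0" using h' a b by blast
      have "lc n d (\<lambda>k. - c k / c d) F $$ (a,b) = - (\<Sum>k<d. c k * F k $$ (a,b)) / c d"
        using a b by (simp add: lc_def sum_divide_distrib[symmetric] sum_negf)
      also have "- (\<Sum>k<d. c k * F k $$ (a,b)) = c d * Y $$ (a,b)" using e by (metis add_eq_0_iff minus_minus add.commute)
      finally show "Y $$ (a,b) = lc n d (\<lambda>k. - c k / c d) F $$ (a,b)" using cd by simp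
    qed (use Yc in \<open>auto simp: lc_def\<close>)
    hence "Y \<in> mat_lin_span n d F" unfolding lin_span_lc by blast
    thus False using Y by simp
  qed
  have "\<forall>a<n. \<forall>b<n. (\<Sum>k<d. c k * F k $$ (a,b)) = 0" using h' cd by simp
  hence "\<forall>k<d. c k = 0" using ind unfolding indep_def by blast
  thus "c k = 0" using cd k by (cases "k = d") auto
qed

lemma span_exists:
  fixes S :: "'a::conjugatable_ordered_field mat set"
  assumes S: "S \<subseteq> carrier_mat n n"
  shows "\<exists>d D. (\<forall>k<d. D k \<in> S) \<and> S \<subseteq> mat_lin_span n d D"
proof (cases "n = 0")
  case True
  have "S \<subseteq> mat_lin_span n 0 D" for D :: "nat \<Rightarrow> 'a mat"
  proof
    fix Y assume "Y \<in> S"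
    hence "Y = lc n 0 (\<lambda>_. 0) D" using S True by (intro eq_matI) (auto simp: lc_def)
    thus "Y \<in> mat_lin_span n 0 D" unfolding lin_span_lc by blast
  qed
  thus ?thesis by blast
next
  case False
  hence n: "n > 0" by simp
  define P where "P d = (\<exists>F. (\<forall>k<d. F k \<in> S) \<and> indep n d F)" for d
  have bnd: "P d \<Longrightarrow> d \<le> n*n" for d
  proof -
    assume "P d"
    then obtain F where F: "\<forall>k<d. F k \<in> S" "indep n d F" unfolding P_def by blast
    have "\<forall>k<d. F k \<in> mat_lin_span n (n*n) (\<lambda>q. Eu n (q div n) (q mod n))"
      using F(1) S units_span[OF _ n] by blast
    thus "d \<le> n*n" using indep_bound[OF F(2)] by blast
  qed
  have P0: "P 0" unfolding P_def indep_def by auto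
  define d0 where "d0 = (GREATEST d. P d)"
  have Pd0: "P d0" unfolding d0_def by (rule GreatestI_nat[where P=P, OF P0]) (use bnd in blast)
  have mx: "\<not> P (Suc d0)"
  proof
    assume "P (Suc d0)"
    hence "Suc d0 \<le> d0" unfolding d0_def by (rule Greatest_le_nat) (use bnd in blast)
    thus False by simp
  qed
  obtain F where F: "\<forall>k<d0. F k \<in> S" "indep n d0 F" using Pd0 unfolding P_def by blast
  have "S \<subseteq> mat_lin_span n d0 F"
  proof
    fix Y assume Y: "Y \<in> S"
    show "Y \<in> mat_lin_span n d0 F"
    proof (rule ccontr)
      assume nY: "Y \<notin> mat_lin_span n d0 F"
      have "indep n (Suc d0) (F(d0 := Y))" by (rule indep_extend[OF F(2) _ nY]) (use Y S in blast)
      moreover have "\<forall>k<Suc d0. (F(d0 := Y)) k \<in> S" using F(1) Y by auto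
      ultimately have "P (Suc d0)" unfolding P_def by blast
      thus False using mx by simp
    qed
  qed
  thus ?thesis using F(1) by blast
qed

lemma lyap_carrier: "A \<in> carrier_mat n n \<Longrightarrow> X \<in> carrier_mat n n \<Longrightarrow> lyap_op A X \<in> carrier_mat n n"
  unfolding lyap_op_def by (intro add_carrier_mat mult_carrier_mat) auto

lemma lyap_entry: assumes A: "A \<in> carrier_mat n n" and X: "X \<in> carrier_mat n n" and i: "i < n" and j: "j < n"
  shows "lyap_op A X $$ (i,j) = (\<Sum>k<n. X $$ (i,k) * A $$ (k,j)) + (\<Sum>k<n. conjugate (A $$ (k,i)) * X $$ (k,j))"
  using A X i j by (simp add: lyap_op_def scalar_prod_def lessThan_atLeast0)

lemma lyap_diff: assumes A: "A \<in> carrier_mat n n" and X: "X \<in> carrier_mat n n" and Y: "Y \<in> carrier_mat n n"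
  shows "lyap_op A (X - Y) = lyap_op A X - lyap_op A Y"
proof (rule eq_matI)
  fix i j assume i: "i < dim_row (lyap_op A X - lyap_op A Y)" and j: "j < dim_col (lyap_op A X - lyap_op A Y)"
  have i: "i < n" and j: "j < n" using i j lyap_carrier[OF A X] lyap_carrier[OF A Y] by auto
  have XY: "X - Y \<in> carrier_mat n n" using X Y by auto
  show "lyap_op A (X - Y) $$ (i,j) = (lyap_op A X - lyap_op A Y) $$ (i,j)"
    using lyap_entry[OF A XY i j] lyap_entry[OF A X i j] lyap_entry[OF A Y i j] lyap_carrier[OF A X] lyap_carrier[OF A Y] i j X Y
    by (simp add: algebra_simps sum_subtractf)
qed (use lyap_carrier[OF A] X Y in \<open>auto simp: lyap_op_def\<close>)

lemma lyap_inv_props: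
  fixes A :: "'a::conjugatable_ordered_field mat"
  assumes A: "A \<in> carrier_mat n n"
  and inj: "\<forall>X\<in>carrier_mat n n. lyap_op A X = 0\<^sub>m n n \<longrightarrow> X = 0\<^sub>m n n"
  and surj: "\<forall>V\<in>carrier_mat n n. \<exists>X\<in>carrier_mat n n. lyap_op A X = V"
  and V: "V \<in> carrier_mat n n"
  shows "lyap_inv n A V \<in> carrier_mat n n \<and> lyap_op A (lyap_inv n A V) = V \<and>
    (\<forall>X. X \<in> carrier_mat n n \<longrightarrow> lyap_op A X = V \<longrightarrow> lyap_inv n A V = X)"
proof -
  have uniq: "X1 = X2" if X1: "X1 \<in> carrier_mat n n" and X2: "X2 \<in> carrier_mat n n" and e: "lyap_op A X1 = lyap_op A X2" for X1 X2
  proof -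
    have L2: "lyap_op A X2 \<in> carrier_mat n n" by (rule lyap_carrier[OF A X2])
    have "lyap_op A (X1 - X2) = lyap_op A X1 - lyap_op A X2" by (rule lyap_diff[OF A X1 X2])
    also have "\<dots> = lyap_op A X2 - lyap_op A X2" unfolding e ..
    also have "\<dots> = 0\<^sub>m n n" by (rule minus_r_inv_mat[OF L2])
    finally have "lyap_op A (X1 - X2) = 0\<^sub>m n n" .
    moreover have "X1 - X2 \<in> carrier_mat n n" using X2 by (rule minus_carrier_mat)
    ultimately have z: "X1 - X2 = 0\<^sub>m n n" using inj by blast
    show ?thesis
    proof (rule eq_matI)
      fix i j assume "i < dim_row X2" "j < dim_col X2"
      hence i: "i < n" and j: "j < n" using X2 by auto
      have "(X1 - X2) $$ (i,j) = 0" using z i j by simp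
      thus "X1 $$ (i,j) = X2 $$ (i,j)" using X1 X2 i j by simp
    qed (use X1 X2 in auto)
  qed
  obtain X where X: "X \<in> carrier_mat n n" "lyap_op A X = V" using surj V by blast
  have th: "lyap_inv n A V = X" unfolding lyap_inv_def
  proof (rule the_equality)
    show "X \<in> carrier_mat n n \<and> lyap_op A X = V" using X by simp
    fix Y assume "Y \<in> carrier_mat n n \<and> lyap_op A Y = V"
    thus "Y = X" using uniq[of Y X] X by simp
  qed
  show ?thesis
  proof (intro conjI allI impI)
    show "lyap_inv n A V \<in> carrier_mat n n" using th X by simp
    show "lyap_op A (lyap_inv n A V) = V" using th X by simp
    fix Y assume "Y \<in> carrier_mat n n" "lyap_op A Y = V"
    thus "lyap_inv n A V = Y" using th X uniq[of Y X] by simp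
  qed
qed
lemma lyap_left: assumes A: "A \<in> carrier_mat n n" and X: "X \<in> carrier_mat n n" and Z: "Z \<in> carrier_mat n n"
  and c: "mat_adjoint A * Z = Z * mat_adjoint A"
  shows "lyap_op A (Z * X) = Z * lyap_op A X"
proof -
  have Aa: "mat_adjoint A \<in> carrier_mat n n" using A by simp
  have "lyap_op A (Z * X) = Z * X * A + mat_adjoint A * (Z * X)" by (simp add: lyap_op_def)
  also have "mat_adjoint A * (Z * X) = (mat_adjoint A * Z) * X" using assoc_mult_mat[OF Aa Z X] by simp
  also have "\<dots> = Z * (mat_adjoint A * X)" using c assoc_mult_mat[OF Z Aa X] by simp
  also have "Z * X * A = Z * (X * A)" using assoc_mult_mat[OF Z X A] .
  also have "Z * (X * A) + Z * (mat_adjoint A * X) = Z * (X * A + mat_adjoint A * X)"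
    using mult_add_distrib_mat[OF Z mult_carrier_mat[OF X A] mult_carrier_mat[OF Aa X]] by simp
  finally show ?thesis by (simp add: lyap_op_def)
qed

lemma module_prop:
  fixes A B :: "'a::conjugatable_ordered_field mat"
  assumes A: "A \<in> carrier_mat n n" and B: "B \<in> carrier_mat n n" and Bb: "B \<in> bicomm n A"
  and inj: "\<forall>X\<in>carrier_mat n n. lyap_op A X = 0\<^sub>m n n \<longrightarrow> X = 0\<^sub>m n n"
  and surj: "\<forall>V\<in>carrier_mat n n. \<exists>X\<in>carrier_mat n n. lyap_op A X = V"
  shows "\<forall>Z\<in>commutant n {mat_adjoint A}. \<forall>V\<in>carrier_mat n n. lyap_AB n A B (Z * V) = Z * lyap_AB n A B V"
proof (intro ballI)
  fix Z V :: "'a mat" assume Zm: "Z \<in> commutant n {mat_adjoint A}" and V: "V \<in> carrier_mat n n"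
  have Z: "Z \<in> carrier_mat n n" and cA: "Z * mat_adjoint A = mat_adjoint A * Z" using Zm by (auto simp: commutant_def)
  note P = lyap_inv_props[OF A inj surj V]
  define X where "X = lyap_inv n A V"
  have X: "X \<in> carrier_mat n n" and LX: "lyap_op A X = V" using P by (auto simp: X_def)
  have ZV: "Z * V \<in> carrier_mat n n" using Z V by simp
  have "lyap_op A (Z * X) = Z * V" using lyap_left[OF A X Z cA[symmetric]] LX by simp
  moreover have "Z * X \<in> carrier_mat n n" using Z X by simp
  ultimately have inv: "lyap_inv n A (Z * V) = Z * X" using lyap_inv_props[OF A inj surj ZV] by blast
  have "mat_adjoint Z \<in> commutant n {A}" by (rule commutant_adj[OF A Zm])
  hence BZ: "B * mat_adjoint Z = mat_adjoint Z * B" using Bb unfolding bicomm_def commutant_def by blast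
  have "Z * mat_adjoint B = mat_adjoint (B * mat_adjoint Z)"
    using adj_mult[OF B adj_carrier[OF Z]] unfolding adj_adj by simp
  also have "\<dots> = mat_adjoint (mat_adjoint Z * B)" unfolding BZ ..
  also have "\<dots> = mat_adjoint B * Z"
    using adj_mult[OF adj_carrier[OF Z] B] unfolding adj_adj by simp
  finally have cB: "Z * mat_adjoint B = mat_adjoint B * Z" .
  have "lyap_AB n A B (Z * V) = lyap_op B (Z * X)" by (simp add: lyap_AB_def inv)
  also have "\<dots> = Z * lyap_op B X" by (rule lyap_left[OF B X Z cB[symmetric]])
  finally show "lyap_AB n A B (Z * V) = Z * lyap_AB n A B V" by (simp add: lyap_AB_def X_def)
qed

lemma span_sub: assumes C: "\<forall>k<m. C k \<in> carrier_mat n n" shows "mat_lin_span n m C \<subseteq> span_C_I n m C"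
proof
  fix Y assume "Y \<in> mat_lin_span n m C"
  then obtain c where Y: "Y = lc n m c C" unfolding lin_span_lc by blast
  let ?D = "\<lambda>k. if k < m then C k else 1\<^sub>m n"
  have "Y = lc n (Suc m) (c(m := 0)) ?D"
    unfolding Y by (intro eq_matI) (auto simp: lc_def intro!: sum.cong)
  thus "Y \<in> span_C_I n m C" unfolding span_C_I_lc by blast
qed

lemma case2:
  fixes A B P H :: "'a::conjugatable_ordered_field mat"
  assumes A: "A \<in> carrier_mat n n" and B: "B \<in> carrier_mat n n" and Bb: "B \<in> bicomm n A"
  and inj: "\<forall>X\<in>carrier_mat n n. lyap_op A X = 0\<^sub>m n n \<longrightarrow> X = 0\<^sub>m n n"
  and surj: "\<forall>V\<in>carrier_mat n n. \<exists>X\<in>carrier_mat n n. lyap_op A X = V"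
  and mh: "min_hill_rep n (lyap_AB n A B) m C H"
  and P: "P \<in> carrier_mat m m" and Pinv: "invertible_mat P" and HP: "H = mat_adjoint P * P"
  and md: "m = mat_subspace_dim n (bicomm n A)"
  shows "(\<forall>k<m. C k \<in> bicomm n (mat_adjoint A)) \<and> bicomm n (mat_adjoint A) \<subseteq> span_C_I n m C"
proof -
  have hr: "hill_rep n (lyap_AB n A B) m C H" using mh by (simp add: min_hill_rep_def)
  hence Cc: "\<forall>k<m. C k \<in> carrier_mat n n" by (auto simp: hill_rep_def)
  obtain Q where Q: "Q \<in> carrier_mat m m" "Q * P = 1\<^sub>m m" "P * Q = 1\<^sub>m m" using inv_left[OF P Pinv] by blast
  define K where "K = Q * mat_adjoint Q"
  have Pa: "mat_adjoint P \<in> carrier_mat m m" and Qa: "mat_adjoint Q \<in> carrier_mat m m" using P Q by auto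
  have Kc: "K \<in> carrier_mat m m" using Q Qa by (simp add: K_def)
  have e1: "H * K = mat_adjoint P * (P * (Q * mat_adjoint Q))"
    unfolding HP K_def using assoc_mult_mat[OF Pa P mult_carrier_mat[OF Q(1) Qa]] .
  have e2: "P * (Q * mat_adjoint Q) = mat_adjoint Q"
  proof -
    have "P * (Q * mat_adjoint Q) = (P * Q) * mat_adjoint Q" using assoc_mult_mat[OF P Q(1) Qa] by simp
    also have "\<dots> = mat_adjoint Q" unfolding Q(3) using left_mult_one_mat[OF Qa] .
    finally show ?thesis .
  qed
  have e3: "mat_adjoint P * mat_adjoint Q = 1\<^sub>m m" using adj_mult[OF Q(1) P] Q(2) by simp
  have HK: "H * K = 1\<^sub>m m" using e1 e2 e3 by simp
  have modl: "\<forall>Z\<in>commutant n {mat_adjoint A}. \<forall>V\<in>carrier_mat n n. lyap_AB n A B (Z * V) = Z * lyap_AB n A B V"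
    by (rule module_prop[OF A B Bb inj surj])
  have Cb: "\<forall>k<m. C k \<in> bicomm n (mat_adjoint A)"
    using C_bicomm[OF mh A Kc HK modl] by blast
  have ind: "indep n m C" unfolding indep_def using min_indep[OF mh] by blast
  define S where "S = bicomm n A"
  have Sc: "S \<subseteq> carrier_mat n n" by (simp add: S_def bicomm_carrier)
  obtain D where D: "\<forall>k<m. D k \<in> S" "S \<subseteq> mat_lin_span n m D"
  proof -
    have ex: "\<exists>d D. (\<forall>k<d. D k \<in> S) \<and> S \<subseteq> mat_lin_span n d D" by (rule span_exists[OF Sc])
    have "\<exists>D. (\<forall>k<m. D k \<in> S) \<and> S \<subseteq> mat_lin_span n m D"
      unfolding md mat_subspace_dim_def S_def[symmetric] by (rule LeastI_ex[OF ex])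
    thus ?thesis using that by blast
  qed
  have Dc: "\<forall>k<m. D k \<in> carrier_mat n n" using D(1) Sc by blast
  have Aa: "mat_adjoint A \<in> carrier_mat n n" using A by simp
  have S'sub: "bicomm n (mat_adjoint A) \<subseteq> mat_lin_span n m (\<lambda>k. mat_adjoint (D k))"
  proof
    fix Y assume Y: "Y \<in> bicomm n (mat_adjoint A)"
    have "mat_adjoint Y \<in> bicomm n (mat_adjoint (mat_adjoint A))" by (rule bicomm_adj[OF Aa Y])
    hence "mat_adjoint Y \<in> S" by (simp add: S_def adj_adj)
    then obtain c where c: "mat_adjoint Y = lc n m c D" using D(2) unfolding lin_span_lc by blast
    have "Y = mat_adjoint (lc n m c D)" using c by (metis adj_adj)
    also have "\<dots> = lc n m (\<lambda>j. conjugate (c j)) (\<lambda>j. mat_adjoint (D j))" by (rule adj_lc[OF Dc])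
    finally show "Y \<in> mat_lin_span n m (\<lambda>k. mat_adjoint (D k))" unfolding lin_span_lc by blast
  qed
  have "bicomm n (mat_adjoint A) \<subseteq> mat_lin_span n m C"
  proof
    fix Y assume Y: "Y \<in> bicomm n (mat_adjoint A)"
    show "Y \<in> mat_lin_span n m C"
    proof (rule ccontr)
      assume nY: "Y \<notin> mat_lin_span n m C"
      have Yc: "Y \<in> carrier_mat n n" using Y bicomm_carrier by blast
      have i2: "indep n (Suc m) (C(m := Y))" by (rule indep_extend[OF ind Yc nY])
      have "\<forall>k<Suc m. (C(m := Y)) k \<in> mat_lin_span n m (\<lambda>k. mat_adjoint (D k))"
        using S'sub Y Cb by (auto simp: less_Suc_eq)
      from indep_bound[OF i2 this] show False by simp
    qed
  qed
  with span_sub[OF Cc] show ?thesis using Cb by blast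
qed

definition vecm :: "nat \<Rightarrow> 'a mat \<Rightarrow> 'a vec" where
  "vecm n X = vec (n*n) (\<lambda>p. X $$ (p div n, p mod n))"
definition unvecm :: "nat \<Rightarrow> 'a vec \<Rightarrow> 'a mat" where
  "unvecm n w = mat n n (\<lambda>(i,j). w $ (i*n+j))"

lemma ij_lt: fixes i j n :: nat assumes "i < n" "j < n" shows "i*n+j < n*n"
proof -
  have "Suc i * n \<le> n * n" using assms by (intro mult_le_mono1) auto
  thus ?thesis using assms by simp
qed

lemma vecm_unvecm: "w \<in> carrier_vec (n*n) \<Longrightarrow> n > 0 \<Longrightarrow> vecm n (unvecm n w) = w"
  by (intro eq_vecI) (auto simp: vecm_def unvecm_def less_mult_imp_div_less)

lemma unvecm_vecm: "X \<in> carrier_mat n n \<Longrightarrow> unvecm n (vecm n X) = X"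
  by (intro eq_matI) (auto simp: vecm_def unvecm_def ij_lt)

lemma vecm_carrier[simp]: "vecm n X \<in> carrier_vec (n*n)" by (simp add: vecm_def)
lemma unvecm_carrier[simp]: "unvecm n w \<in> carrier_mat n n" by (simp add: unvecm_def)

definition lyapM :: "nat \<Rightarrow> 'a::conjugatable_field mat \<Rightarrow> 'a mat" where
  "lyapM n A = mat (n*n) (n*n) (\<lambda>(p,q). (if p div n = q div n then A $$ (q mod n, p mod n) else 0)
     + (if p mod n = q mod n then conjugate (A $$ (q div n, p div n)) else 0))"

lemma lyapM_carrier: "lyapM n A \<in> carrier_mat (n*n) (n*n)" by (simp add: lyapM_def)

lemma lyapM_vec: assumes n: "n > 0" and A: "A \<in> carrier_mat n n" and X: "X \<in> carrier_mat n n"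
  shows "lyapM n A *\<^sub>v vecm n X = vecm n (lyap_op A X)"
proof (rule eq_vecI)
  fix p assume "p < dim_vec (vecm n (lyap_op A X))"
  hence p: "p < n*n" by (simp add: vecm_def)
  define a where "a = p div n"
  define b where "b = p mod n"
  have a: "a < n" using p n by (simp add: a_def less_mult_imp_div_less)
  have b: "b < n" using n by (simp add: b_def)
  have "(lyapM n A *\<^sub>v vecm n X) $ p = (\<Sum>q<n*n. lyapM n A $$ (p,q) * vecm n X $ q)"
    by (rule mult_mat_vec_sum[OF lyapM_carrier vecm_carrier p])
  also have "\<dots> = (\<Sum>c<n. \<Sum>d<n. lyapM n A $$ (p,c*n+d) * vecm n X $ (c*n+d))"
    by (rule sum_split_mult)
  also have "\<dots> = (\<Sum>c<n. \<Sum>d<n. ((if a = c then A $$ (d, b) else 0) + (if b = d then conjugate (A $$ (c, a)) else 0)) * X $$ (c,d))"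
    using p ij_lt by (intro sum.cong refl) (simp add: lyapM_def vecm_def a_def b_def)
  also have "\<dots> = (\<Sum>c<n. \<Sum>d<n. (if a = c then A $$ (d, b) * X $$ (c,d) else 0)) + (\<Sum>c<n. \<Sum>d<n. (if b = d then conjugate (A $$ (c, a)) * X $$ (c,d) else 0))"
    by (simp add: sum.distrib distrib_right if_distrib[of "\<lambda>x. x * _"] cong: if_cong)
  also have "\<dots> = (\<Sum>d<n. X $$ (a,d) * A $$ (d,b)) + (\<Sum>c<n. conjugate (A $$ (c,a)) * X $$ (c,b))"
  proof -
    have "(\<Sum>c<n. \<Sum>d<n. (if a = c then A $$ (d, b) * X $$ (c,d) else 0)) = (\<Sum>d<n. X $$ (a,d) * A $$ (d,b))"
    proof -
      have "(\<Sum>c<n. \<Sum>d<n. (if a = c then A $$ (d, b) * X $$ (c,d) else 0)) = (\<Sum>c<n. if a = c then (\<Sum>d<n. A $$ (d, b) * X $$ (c,d)) else 0)"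
        by (intro sum.cong refl) auto
      also have "\<dots> = (\<Sum>d<n. A $$ (d, b) * X $$ (a,d))" using a by (simp add: sum.delta)
      finally show ?thesis by (simp add: mult.commute)
    qed
    moreover have "(\<Sum>c<n. \<Sum>d<n. (if b = d then conjugate (A $$ (c, a)) * X $$ (c,d) else 0)) = (\<Sum>c<n. conjugate (A $$ (c,a)) * X $$ (c,b))"
      using b by (intro sum.cong refl) (simp add: sum.delta)
    ultimately show ?thesis by simp
  qed
  also have "\<dots> = lyap_op A X $$ (a,b)" using lyap_entry[OF A X a b] by simp
  also have "\<dots> = vecm n (lyap_op A X) $ p" using p by (simp add: vecm_def a_def b_def)
  finally show "(lyapM n A *\<^sub>v vecm n X) $ p = vecm n (lyap_op A X) $ p" .
qed (simp add: lyapM_def vecm_def)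

lemma inj_surj:
  fixes A :: "'a::conjugatable_ordered_field mat"
  assumes A: "A \<in> carrier_mat n n"
  and inj: "\<forall>X\<in>carrier_mat n n. lyap_op A X = 0\<^sub>m n n \<longrightarrow> X = 0\<^sub>m n n"
  shows "\<forall>V\<in>carrier_mat n n. \<exists>X\<in>carrier_mat n n. lyap_op A X = V"
proof (cases "n = 0")
  case True
  show ?thesis
  proof
    fix V :: "'a mat" assume V: "V \<in> carrier_mat n n"
    have L: "lyap_op A (0\<^sub>m n n) \<in> carrier_mat n n" by (rule lyap_carrier[OF A zero_carrier_mat])
    have "lyap_op A (0\<^sub>m n n) = V"
    proof (rule eq_matI)
      fix i j assume i: "i < dim_row V"
      have "dim_row V = n" using V by (rule carrier_matD)
      hence False using i True by linarith
      thus "lyap_op A (0\<^sub>m n n) $$ (i,j) = V $$ (i,j)" by blast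
    next
      show "dim_row (lyap_op A (0\<^sub>m n n)) = dim_row V" using carrier_matD(1)[OF L] carrier_matD(1)[OF V] by argo
      show "dim_col (lyap_op A (0\<^sub>m n n)) = dim_col V" using carrier_matD(2)[OF L] carrier_matD(2)[OF V] by argo
    qed
    thus "\<exists>X\<in>carrier_mat n n. lyap_op A X = V" by (intro bexI[OF _ zero_carrier_mat])
  qed
next
  case False
  hence n: "n > 0" by simp
  let ?M = "lyapM n A"
  have Mc: "?M \<in> carrier_mat (n*n) (n*n)" by (rule lyapM_carrier)
  have "det ?M \<noteq> 0"
  proof
    assume "det ?M = 0"
    then obtain w where w: "w \<in> carrier_vec (n*n)" "w \<noteq> 0\<^sub>v (n*n)" "?M *\<^sub>v w = 0\<^sub>v (n*n)"
      using det_0_iff_vec_prod_zero[OF Mc] by blast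
    define X where "X = unvecm n w"
    have X: "X \<in> carrier_mat n n" by (simp add: X_def)
    have "vecm n (lyap_op A X) = 0\<^sub>v (n*n)" using lyapM_vec[OF n A X] w vecm_unvecm[OF w(1) n] by (simp add: X_def)
    hence "unvecm n (vecm n (lyap_op A X)) = unvecm n (0\<^sub>v (n*n))" by simp
    hence "lyap_op A X = unvecm n (0\<^sub>v (n*n))" using unvecm_vecm[OF lyap_carrier[OF A X]] by simp
    also have "\<dots> = 0\<^sub>m n n" by (intro eq_matI) (auto simp: unvecm_def ij_lt)
    finally have "X = 0\<^sub>m n n" using inj X by blast
    hence "vecm n X = 0\<^sub>v (n*n)" by (intro eq_vecI) (auto simp: vecm_def less_mult_imp_div_less n)
    thus False using w vecm_unvecm[OF w(1) n] by (simp add: X_def)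
  qed
  from det_non_zero_imp_unit[OF Mc this, of "()"] obtain Mi where Mi: "Mi \<in> carrier_mat (n*n) (n*n)" "?M * Mi = 1\<^sub>m (n*n)"
    unfolding Units_def ring_mat_def by auto
  show ?thesis
  proof
    fix V :: "'a mat" assume V: "V \<in> carrier_mat n n"
    define X where "X = unvecm n (Mi *\<^sub>v vecm n V)"
    have X: "X \<in> carrier_mat n n" by (simp add: X_def)
    have wc: "Mi *\<^sub>v vecm n V \<in> carrier_vec (n*n)" using Mi by simp
    have "vecm n (lyap_op A X) = ?M *\<^sub>v (Mi *\<^sub>v vecm n V)"
      using lyapM_vec[OF n A X] vecm_unvecm[OF wc n] by (simp add: X_def)
    also have "\<dots> = (?M * Mi) *\<^sub>v vecm n V" using assoc_mult_mat_vec[OF Mc Mi(1) vecm_carrier] by simp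
    also have "\<dots> = vecm n V" using Mi by simp
    finally have "unvecm n (vecm n (lyap_op A X)) = unvecm n (vecm n V)" by simp
    hence "lyap_op A X = V" using unvecm_vecm[OF lyap_carrier[OF A X]] unvecm_vecm[OF V] by simp
    thus "\<exists>X\<in>carrier_mat n n. lyap_op A X = V" using X by (intro bexI[of _ X])
  qed
qed

lemma sum_single_nat: fixes f :: "nat \<Rightarrow> 'a::comm_monoid_add"
  assumes j: "j < n" and z: "\<And>k. k < n \<Longrightarrow> k \<noteq> j \<Longrightarrow> f k = 0"
  shows "(\<Sum>k<n. f k) = f j"
proof -
  have "(\<Sum>k<n. f k) = (\<Sum>k<n. if k = j then f j else 0)" using z by (intro sum.cong refl) auto
  also have "\<dots> = f j" using j by (simp add: sum.delta)
  finally show ?thesis .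
qed

lemma assoc_g2: fixes a :: "'a::comm_ring_1 mat" assumes "a \<in> carrier_mat n n" "b \<in> carrier_mat n n" "c \<in> carrier_mat n n" "d \<in> carrier_mat n n" "e \<in> carrier_mat n n" "f \<in> carrier_mat n n"
  shows "a*((b*c*d)*e)*f = (a*b)*c*(d*e*f)"
  using assms by (simp add: assoc_mult_mat[of _ n n _ n _ n])

lemma assoc_g3: fixes a :: "'a::comm_ring_1 mat" assumes "a \<in> carrier_mat n n" "b \<in> carrier_mat n n" "c \<in> carrier_mat n n" "d \<in> carrier_mat n n" "e \<in> carrier_mat n n"
  shows "(a*b)*c*(d*e) = a*(b*c*d)*e"
  using assms by (simp add: assoc_mult_mat[of _ n n _ n _ n])

lemma tri_inj:
  fixes T Y :: "complex mat"
  assumes T: "T \<in> carrier_mat n n" and ut: "upper_triangular T" and Y: "Y \<in> carrier_mat n n"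
  and ev: "\<forall>i<n. \<forall>j<n. T $$ (j,j) + cnj (T $$ (i,i)) \<noteq> 0"
  and L: "lyap_op T Y = 0\<^sub>m n n"
  shows "Y = 0\<^sub>m n n"
proof -
  have Tz: "T $$ (k,j) = 0" if "j < k" "k < n" for k j using ut T that unfolding upper_triangular_def by auto
  have main: "\<forall>i j. i + j = s \<longrightarrow> i < n \<longrightarrow> j < n \<longrightarrow> Y $$ (i,j) = 0" for s
  proof (induct s rule: less_induct)
    case (less s)
    show ?case
    proof (intro allI impI)
      fix i j assume s: "i + j = s" and i: "i < n" and j: "j < n"
      have "lyap_op T Y $$ (i,j) = 0" using L i j by simp
      hence e: "(\<Sum>k<n. Y $$ (i,k) * T $$ (k,j)) + (\<Sum>k<n. conjugate (T $$ (k,i)) * Y $$ (k,j)) = 0"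
        using lyap_entry[OF T Y i j] by simp
      have s1: "(\<Sum>k<n. Y $$ (i,k) * T $$ (k,j)) = Y $$ (i,j) * T $$ (j,j)"
      proof (rule sum_single_nat[OF j])
        fix k assume k: "k < n" "k \<noteq> j"
        show "Y $$ (i,k) * T $$ (k,j) = 0"
        proof (cases "k < j")
          case True
          hence "Y $$ (i,k) = 0" using less[of "i+k"] s i k by auto
          thus ?thesis by simp
        next
          case False
          hence "T $$ (k,j) = 0" using Tz k by auto
          thus ?thesis by simp
        qed
      qed
      have s2: "(\<Sum>k<n. conjugate (T $$ (k,i)) * Y $$ (k,j)) = conjugate (T $$ (i,i)) * Y $$ (i,j)"
      proof (rule sum_single_nat[OF i])
        fix k assume k: "k < n" "k \<noteq> i"
        show "conjugate (T $$ (k,i)) * Y $$ (k,j) = 0"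
        proof (cases "k < i")
          case True
          hence "Y $$ (k,j) = 0" using less[of "k+j"] s j k by auto
          thus ?thesis by simp
        next
          case False
          hence "T $$ (k,i) = 0" using Tz k by auto
          thus ?thesis by simp
        qed
      qed
      have "Y $$ (i,j) * (T $$ (j,j) + cnj (T $$ (i,i))) = 0" using e s1 s2 by (simp add: algebra_simps)
      thus "Y $$ (i,j) = 0" using ev i j by auto
    qed
  qed
  show ?thesis using main Y by (intro eq_matI) auto
qed

lemma eig_tri:
  fixes A T :: "complex mat"
  assumes A: "A \<in> carrier_mat n n" and T: "T \<in> carrier_mat n n" and ut: "upper_triangular T"
  and sim: "similar_mat A T" and i: "i < n"
  shows "eigenvalue A (T $$ (i,i))"
proof -
  have "char_poly A = char_poly T" by (rule char_poly_similar[OF sim])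
  also have "\<dots> = (\<Prod>a\<leftarrow>diag_mat T. [:- a, 1:])" by (rule char_poly_upper_triangular[OF T ut])
  finally have cp: "char_poly A = (\<Prod>a\<leftarrow>diag_mat T. [:- a, 1:])" .
  have mem: "T $$ (i,i) \<in> set (diag_mat T)" using i T by (auto simp: diag_mat_def)
  have "poly (char_poly A) (T $$ (i,i)) = (\<Prod>a\<leftarrow>diag_mat T. poly [:- a, 1:] (T $$ (i,i)))"
    unfolding cp by (simp add: poly_prod_list o_def)
  also have "\<dots> = 0" using mem by (simp add: prod_list_zero_iff o_def)
  finally show ?thesis using eigenvalue_root_char_poly[OF A] by simp
qed

lemma complex_inj:
  fixes A :: "complex mat"
  assumes A: "A \<in> carrier_mat n n"
  and ev: "\<forall>la mu. eigenvalue A la \<longrightarrow> eigenvalue A mu \<longrightarrow> la + cnj mu \<noteq> 0"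
  shows "\<forall>X\<in>carrier_mat n n. lyap_op A X = 0\<^sub>m n n \<longrightarrow> X = 0\<^sub>m n n"
proof (intro ballI impI)
  fix X :: "complex mat" assume X: "X \<in> carrier_mat n n" and LX: "lyap_op A X = 0\<^sub>m n n"
  obtain es where es: "char_poly A = (\<Prod>a\<leftarrow>es. [:- a, 1:])" using char_poly_factorized[OF A] by blast
  obtain T where T: "T \<in> carrier_mat n n" "upper_triangular T" "similar_mat A T"
    using schur_decomposition_exists[OF A es] by blast
  obtain P Q where PQ: "P \<in> carrier_mat n n" "Q \<in> carrier_mat n n" "P * Q = 1\<^sub>m n" "Q * P = 1\<^sub>m n" "A = P * T * Q"
  proof -
    from similar_matD[OF T(3)] obtain n' P Q where h: "{A, T, P, Q} \<subseteq> carrier_mat n' n'" "P * Q = 1\<^sub>m n'" "Q * P = 1\<^sub>m n'" "A = P * T * Q"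
      by blast
    have "n' = n" using h(1) A by auto
    thus ?thesis using that h by auto
  qed
  have Pa: "mat_adjoint P \<in> carrier_mat n n" and Qa: "mat_adjoint Q \<in> carrier_mat n n"
    and Ta: "mat_adjoint T \<in> carrier_mat n n" using PQ T by auto
  have Aadj: "mat_adjoint A = mat_adjoint Q * mat_adjoint T * mat_adjoint P"
  proof -
    have "mat_adjoint A = mat_adjoint (P * T * Q)" using PQ(5) by simp
    also have "\<dots> = mat_adjoint Q * mat_adjoint (P * T)" using adj_mult[OF mult_carrier_mat[OF PQ(1) T(1)] PQ(2)] .
    also have "mat_adjoint (P * T) = mat_adjoint T * mat_adjoint P" using adj_mult[OF PQ(1) T(1)] .
    finally show ?thesis using Qa Ta Pa by (simp add: assoc_mult_mat[of _ n n _ n _ n])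
  qed
  have PaQa: "mat_adjoint P * mat_adjoint Q = 1\<^sub>m n" using adj_mult[OF PQ(2) PQ(1)] PQ(4) by simp
  have QaPa: "mat_adjoint Q * mat_adjoint P = 1\<^sub>m n" using adj_mult[OF PQ(1) PQ(2)] PQ(3) by simp
  define Y where "Y = mat_adjoint P * X * P"
  have Yc: "Y \<in> carrier_mat n n" unfolding Y_def using mult_carrier_mat[OF mult_carrier_mat[OF Pa X] PQ(1)] .
  have g1: "mat_adjoint P * (X * (P * T * Q)) * P = Y * T * (Q * P)"
    unfolding Y_def using Pa X PQ T by (simp add: assoc_mult_mat[of _ n n _ n _ n])
  have g2: "mat_adjoint P * ((mat_adjoint Q * mat_adjoint T * mat_adjoint P) * X) * P = (mat_adjoint P * mat_adjoint Q) * mat_adjoint T * Y"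
    unfolding Y_def by (rule assoc_g2[OF Pa Qa Ta Pa X PQ(1)])
  have "lyap_op T Y = mat_adjoint P * lyap_op A X * P"
  proof -
    have "mat_adjoint P * lyap_op A X * P = mat_adjoint P * (X * A) * P + mat_adjoint P * (mat_adjoint A * X) * P"
    proof -
      have XA: "X * A \<in> carrier_mat n n" using X A by simp
      have AX: "mat_adjoint A * X \<in> carrier_mat n n" using mult_carrier_mat[OF adj_carrier[OF A] X] .
      have "mat_adjoint P * (X * A + mat_adjoint A * X) = mat_adjoint P * (X * A) + mat_adjoint P * (mat_adjoint A * X)"
        by (rule mult_add_distrib_mat[OF Pa XA AX])
      moreover have "(mat_adjoint P * (X * A) + mat_adjoint P * (mat_adjoint A * X)) * P = mat_adjoint P * (X * A) * P + mat_adjoint P * (mat_adjoint A * X) * P"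
        by (rule add_mult_distrib_mat[OF mult_carrier_mat[OF Pa XA] mult_carrier_mat[OF Pa AX] PQ(1)])
      ultimately show ?thesis unfolding lyap_op_def by simp
    qed
    also have "\<dots> = Y * T + mat_adjoint T * Y"
      unfolding Aadj using g1 g2 PQ(5) PQ(4) PaQa Yc T Ta by simp
    finally show ?thesis by (simp add: lyap_op_def)
  qed
  also have "\<dots> = 0\<^sub>m n n" using LX Pa PQ by simp
  finally have LY: "lyap_op T Y = 0\<^sub>m n n" .
  have evT: "\<forall>i<n. \<forall>j<n. T $$ (j,j) + cnj (T $$ (i,i)) \<noteq> 0"
    using ev eig_tri[OF A T] by blast
  have Y0: "Y = 0\<^sub>m n n" by (rule tri_inj[OF T(1) T(2) Yc evT LY])
  have "X = (mat_adjoint Q * mat_adjoint P) * X * (P * Q)" using QaPa PQ(3) X by simp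
  also have "\<dots> = mat_adjoint Q * Y * Q" unfolding Y_def by (rule assoc_g3[OF Qa Pa X PQ(1) PQ(2)])
  also have "\<dots> = 0\<^sub>m n n" using Y0 Qa PQ by simp
  finally show "X = 0\<^sub>m n n" .
qed

lemma real_inj:
  fixes A :: "real mat"
  assumes A: "A \<in> carrier_mat n n"
  and ev: "\<forall>la mu. eigenvalue (map_mat complex_of_real A) la \<longrightarrow> eigenvalue (map_mat complex_of_real A) mu \<longrightarrow> la + cnj mu \<noteq> 0"
  shows "\<forall>X\<in>carrier_mat n n. lyap_op A X = 0\<^sub>m n n \<longrightarrow> X = 0\<^sub>m n n"
proof (intro ballI impI)
  fix X :: "real mat" assume X: "X \<in> carrier_mat n n" and LX: "lyap_op A X = 0\<^sub>m n n"
  let ?Ac = "map_mat complex_of_real A" and ?Xc = "map_mat complex_of_real X"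
  have Ac: "?Ac \<in> carrier_mat n n" and Xc: "?Xc \<in> carrier_mat n n" using A X by auto
  have "lyap_op ?Ac ?Xc = 0\<^sub>m n n"
  proof (rule eq_matI)
    fix i j assume "i < dim_row (0\<^sub>m n n :: complex mat)" "j < dim_col (0\<^sub>m n n :: complex mat)"
    hence i: "i < n" and j: "j < n" by auto
    have "lyap_op ?Ac ?Xc $$ (i,j) = (\<Sum>k<n. ?Xc $$ (i,k) * ?Ac $$ (k,j)) + (\<Sum>k<n. conjugate (?Ac $$ (k,i)) * ?Xc $$ (k,j))"
      by (rule lyap_entry[OF Ac Xc i j])
    also have "\<dots> = complex_of_real ((\<Sum>k<n. X $$ (i,k) * A $$ (k,j)) + (\<Sum>k<n. conjugate (A $$ (k,i)) * X $$ (k,j)))"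
      using A X i j by simp
    also have "\<dots> = complex_of_real (lyap_op A X $$ (i,j))" using lyap_entry[OF A X i j] by simp
    also have "\<dots> = 0" using LX i j by simp
    finally show "lyap_op ?Ac ?Xc $$ (i,j) = 0\<^sub>m n n $$ (i,j)" using i j by simp
  qed (use lyap_carrier[OF Ac Xc] in auto)
  hence "?Xc = 0\<^sub>m n n" using complex_inj[OF Ac ev] Xc by blast
  thus "X = 0\<^sub>m n n"
  proof -
    assume z: "?Xc = 0\<^sub>m n n"
    show ?thesis
    proof (rule eq_matI)
      fix i j assume "i < dim_row (0\<^sub>m n n :: real mat)" "j < dim_col (0\<^sub>m n n :: real mat)"
      hence i: "i < n" and j: "j < n" by auto
      have "?Xc $$ (i,j) = 0" using z i j by simp
      thus "X $$ (i,j) = 0\<^sub>m n n $$ (i,j)" using X i j by simp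
    qed (use X in auto)
  qed
qed

lemma main_generic:
  fixes A B P H :: "'a::conjugatable_ordered_field mat"
  assumes A: "A \<in> carrier_mat n n" and B: "B \<in> carrier_mat n n" and Bb: "B \<in> bicomm n A"
  and inj: "\<forall>X\<in>carrier_mat n n. lyap_op A X = 0\<^sub>m n n \<longrightarrow> X = 0\<^sub>m n n"
  and mh: "min_hill_rep n (lyap_AB n A B) m C H"
  and P: "P \<in> carrier_mat m m" and Pinv: "invertible_mat P" and HP: "H = mat_adjoint P * P"
  and disj: "span_C_I n m C = bicomm n (mat_adjoint A) \<or> m = mat_subspace_dim n (bicomm n A)"
  and Rs: "set Rs \<subseteq> carrier_mat n n"
  shows "mat_kernel (L_Rs n m C P Rs) \<subseteq> mat_kernel (M_Rs n m C P A B Rs)"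
proof -
  have Cc: "\<forall>k<m. C k \<in> carrier_mat n n" using mh by (auto simp: min_hill_rep_def hill_rep_def)
  have "(\<forall>k<m. C k \<in> bicomm n (mat_adjoint A)) \<and> bicomm n (mat_adjoint A) \<subseteq> span_C_I n m C"
  proof (cases "span_C_I n m C = bicomm n (mat_adjoint A)")
    case True
    thus ?thesis using C_in_span Cc by blast
  next
    case False
    hence md: "m = mat_subspace_dim n (bicomm n A)" using disj by blast
    show ?thesis by (rule case2[OF A B Bb inj inj_surj[OF A inj] mh P Pinv HP md])
  qed
  thus ?thesis using main_from_span[OF A B Bb Cc P Pinv _ _ Rs] by blast
qed

theorem lemma6p4:
  shows
  "(\<forall>n (A :: real mat) B m C H P.
      A \<in> carrier_mat n n \<and> B \<in> carrier_mat n n \<and>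
      lyap_regular complex_of_real n A \<and>
      B \<in> CL n A \<inter> bicomm n A \<and>
      min_hill_rep n (lyap_AB n A B) m C H \<and>
      P \<in> carrier_mat m m \<and> invertible_mat P \<and> H = mat_adjoint P * P \<and>
      (span_C_I n m C = bicomm n (mat_adjoint A) \<or> m = mat_subspace_dim n (bicomm n A))
      \<longrightarrow> (\<forall>Rs. set Rs \<subseteq> carrier_mat n n \<longrightarrow>
             mat_kernel (L_Rs n m C P Rs) \<subseteq> mat_kernel (M_Rs n m C P A B Rs)))
   \<and>
   (\<forall>n (A :: complex mat) B m C H P.
      A \<in> carrier_mat n n \<and> B \<in> carrier_mat n n \<and>
      lyap_regular (\<lambda>z. z) n A \<and>
      B \<in> CL n A \<inter> bicomm n A \<and>
      min_hill_rep n (lyap_AB n A B) m C H \<and>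
      P \<in> carrier_mat m m \<and> invertible_mat P \<and> H = mat_adjoint P * P \<and>
      (span_C_I n m C = bicomm n (mat_adjoint A) \<or> m = mat_subspace_dim n (bicomm n A))
      \<longrightarrow> (\<forall>Rs. set Rs \<subseteq> carrier_mat n n \<longrightarrow>
             mat_kernel (L_Rs n m C P Rs) \<subseteq> mat_kernel (M_Rs n m C P A B Rs)))"
proof (intro conjI allI impI)
  fix n m :: nat and A B H P :: "real mat" and C :: "nat \<Rightarrow> real mat" and Rs :: "real mat list"
  assume h: "A \<in> carrier_mat n n \<and> B \<in> carrier_mat n n \<and>
      lyap_regular complex_of_real n A \<and>
      B \<in> CL n A \<inter> bicomm n A \<and>
      min_hill_rep n (lyap_AB n A B) m C H \<and>
      P \<in> carrier_mat m m \<and> invertible_mat P \<and> H = mat_adjoint P * P \<and>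
      (span_C_I n m C = bicomm n (mat_adjoint A) \<or> m = mat_subspace_dim n (bicomm n A))"
    and Rs: "set Rs \<subseteq> carrier_mat n n"
  have inj: "\<forall>X\<in>carrier_mat n n. lyap_op A X = 0\<^sub>m n n \<longrightarrow> X = 0\<^sub>m n n"
    using real_inj h unfolding lyap_regular_def by blast
  show "mat_kernel (L_Rs n m C P Rs) \<subseteq> mat_kernel (M_Rs n m C P A B Rs)"
    using main_generic[OF _ _ _ inj _ _ _ _ _ Rs] h by blast
next
  fix n m :: nat and A B H P :: "complex mat" and C :: "nat \<Rightarrow> complex mat" and Rs :: "complex mat list"
  assume h: "A \<in> carrier_mat n n \<and> B \<in> carrier_mat n n \<and>
      lyap_regular (\<lambda>z. z) n A \<and>
      B \<in> CL n A \<inter> bicomm n A \<and>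
      min_hill_rep n (lyap_AB n A B) m C H \<and>
      P \<in> carrier_mat m m \<and> invertible_mat P \<and> H = mat_adjoint P * P \<and>
      (span_C_I n m C = bicomm n (mat_adjoint A) \<or> m = mat_subspace_dim n (bicomm n A))"
    and Rs: "set Rs \<subseteq> carrier_mat n n"
  have A: "A \<in> carrier_mat n n" using h by blast
  have "map_mat (\<lambda>z. z) A = A" by (intro eq_matI) auto
  hence ev: "\<forall>la mu. eigenvalue A la \<longrightarrow> eigenvalue A mu \<longrightarrow> la + cnj mu \<noteq> 0"
    using h unfolding lyap_regular_def by metis
  have inj: "\<forall>X\<in>carrier_mat n n. lyap_op A X = 0\<^sub>m n n \<longrightarrow> X = 0\<^sub>m n n"
    by (rule complex_inj[OF A ev])
  show "mat_kernel (L_Rs n m C P Rs) \<subseteq> mat_kernel (M_Rs n m C P A B Rs)"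
    using main_generic[OF _ _ _ inj _ _ _ _ _ Rs] h by blast
qed

end
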